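(* Fix $\delta\in(0,1)$, $\beta,h\in\mathbb R$ and $\gamma>0$. For $i,j\ge0$ let $\mathcal A_{i,j}=\mathbb E[(Z^{\beta,h}_{i,j,\omega})^\delta]$ for $i,j\ge1$, with $\mathcal A_{0,0}=1$ and $\mathcal A_{i,0}=\mathcal A_{0,i}=0$ for $i\ge1$. If there exists $k\in\mathbb N$ such that $\rho_1+\rho_2+\rho_3\le1$, where, with $c_\delta:=\mathbb E[e^{\delta(\beta\omega_{1,1}+h)}]$, $$\rho_1=c_\delta\sum_{n\ge k}\sum_{m\ge k}\sum_{i=0}^{k-1}\sum_{j=0}^{k-1}K(n-i+m-j)^\delta\mathcal A_{i,j},\qquad \rho_2=c_\delta\sum_{n=1}^{k-1}\sum_{m\ge k}\sum_{i=0}^{n-1}\sum_{j=0}^{k-1}K(n-i+m-j)^\delta\mathcal A_{i,j},$$ $$\rho_3=c_\delta\sum_{n\ge k}\sum_{m=1}^{k-1}\sum_{i=0}^{k-1}\sum_{j=0}^{m-1}K(n-i+m-j)^\delta\mathcal A_{i,j},$$ then $\textsc{f}_\gamma(\beta,h)=0$.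
   Context: Let $\mathbb N=\{1,2,\dots\}$. Fix $\alpha\ge0$ and a slowly varying function $L$, and set $K(n)=L(n)n^{-(2+\alpha)}$, normalized so that $\sum_{n,m\in\mathbb N}K(n+m)=1$. Let $\tau$ be a bivariate renewal process with law $\mathbf P$: $\tau_0=(0,0)$, i.i.d. increments with $\mathbf P(\tau_1=(n,m))=K(n+m)$, $n,m\in\mathbb N$; $\tau$ is identified with the random set of its points. Let $\omega=\{\omega_{n,m}\}$ be i.i.d. real random variables with law $\mathbb P$, centered, unit variance, $\mathbb E[e^{\beta\omega_{1,1}}]<\infty$ for all $\beta$. Constrained partition function: $Z^{\beta,h}_{N,M,\omega}=\mathbf E[\exp(\sum_{n=1}^N\sum_{m=1}^M(\beta\omega_{n,m}+h)\mathbf 1_{(n,m)\in\tau})\mathbf 1_{(N,M)\in\tau}]$. For $\gamma>0$, $\textsc{f}_\gamma(\beta,h)=\lim_{N\to\infty}\frac1N\mathbb E\log Z^{\beta,h}_{N,M(N),\omega}$ for any sequence with $M(N)/N\to\gamma$ (the limit exists and does not depend on the sequence). *)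

theory Defs
  imports "HOL-Probability.Probability"
begin

definition slowly_varying :: "(real \<Rightarrow> real) \<Rightarrow> bool" where
  "slowly_varying L \<longleftrightarrow> L \<in> borel_measurable borel \<and>
     (\<forall>\<^sub>F x in at_top. L x > 0) \<and>
     (\<forall>c>0. ((\<lambda>x. L (c * x) / L x) \<longlongrightarrow> 1) at_top)"

definition Kfun :: "real \<Rightarrow> (real \<Rightarrow> real) \<Rightarrow> nat \<Rightarrow> real" where
  "Kfun \<alpha> L n = L (real n) * real n powr (-(2 + \<alpha>))"

text \<open>Finite renewal trajectories from (0,0) to (N,M): the points of tau in
  [1,N]x[1,M] when (N,M) is in tau, listed in increasing order.\<close>
definition chains :: "nat \<Rightarrow> nat \<Rightarrow> (nat \<times> nat) list set" where
  "chains N M = {ps. ps \<noteq> [] \<and> last ps = (N, M) \<and>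
      sorted_wrt (\<lambda>p q. fst p < fst q \<and> snd p < snd q) ((0, 0) # ps)}"

definition chain_prob :: "(nat \<Rightarrow> real) \<Rightarrow> (nat \<times> nat) list \<Rightarrow> real" where
  "chain_prob K ps = prod_list (map2 (\<lambda>p q. K ((fst q - fst p) + (snd q - snd p))) ((0, 0) # ps) ps)"

text \<open>Constrained partition function Z^{beta,h}_{N,M,omega}, written as the
  expectation over the renewal law (a finite sum over trajectories).\<close>
definition Zpart :: "(nat \<Rightarrow> real) \<Rightarrow> real \<Rightarrow> real \<Rightarrow> (nat \<times> nat \<Rightarrow> real) \<Rightarrow> nat \<Rightarrow> nat \<Rightarrow> real" where
  "Zpart K \<beta> h w N M = (\<Sum>ps\<in>chains N M.
      chain_prob K ps * exp (sum_list (map (\<lambda>p. \<beta> * w p + h) ps)))"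

end

theory Submission
  imports Defs "HOL-Real_Asymp.Real_Asymp"
begin


abbreviation "cR \<equiv> (\<lambda>p q::nat\<times>nat. fst p < fst q \<and> snd p < snd q)"

lemma map2_snoc:
  "map2 f (a # xs @ [y]) (xs @ [y]) = map2 f (a # xs) xs @ [f (last (a # xs)) y]"
  by (induction xs arbitrary: a) auto

lemma chains_N0: "chains N 0 = {}"
proof -
  { fix ps assume "ps \<in> chains N 0"
    then have "ps \<noteq> []" "last ps = (N, 0)" "sorted_wrt cR ((0,0) # ps)" by (auto simp: chains_def)
    then have "(N,0) \<in> set ps" by (metis last_in_set)
    moreover from \<open>sorted_wrt cR ((0,0) # ps)\<close> have "\<forall>x\<in>set ps. 0 < snd x" by simp
    ultimately have "0 < snd (N,0::nat)" by blast
    then have False by simp }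
  then show ?thesis by auto
qed

lemma chains_0M: "chains 0 M = {}"
proof -
  { fix ps assume "ps \<in> chains 0 M"
    then have "ps \<noteq> []" "last ps = (0, M)" "sorted_wrt cR ((0,0) # ps)" by (auto simp: chains_def)
    then have "(0,M) \<in> set ps" by (metis last_in_set)
    moreover from \<open>sorted_wrt cR ((0,0) # ps)\<close> have "\<forall>x\<in>set ps. 0 < fst x" by simp
    ultimately have "0 < fst (0::nat,M)" by blast
    then have False by simp }
  then show ?thesis by auto
qed

lemma chains_bound:
  assumes "ps \<in> chains i j" "x \<in> set ((0,0) # ps)"
  shows "fst x \<le> i \<and> snd x \<le> j"
proof -
  from assms(1) have ne: "ps \<noteq> []" and l: "last ps = (i,j)" and s: "sorted_wrt cR ((0,0) # ps)"
    by (auto simp: chains_def)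
  have eq: "(0,0) # ps = ((0,0) # butlast ps) @ [(i,j)]"
    using ne l by (metis append_butlast_last_id append_Cons)
  from s have "sorted_wrt cR (((0,0) # butlast ps) @ [(i,j)])" by (subst eq[symmetric])
  then have "\<forall>y\<in>set ((0,0) # butlast ps). cR y (i,j)"
    by (simp only: sorted_wrt_append) auto
  moreover have "x \<in> set ((0,0) # butlast ps) \<or> x = (i,j)"
    using assms(2) by (subst (asm) eq) auto
  ultimately show ?thesis by fastforce
qed

lemma chains_pos:
  assumes "ps \<in> chains i j" "x \<in> set ps"
  shows "fst x \<ge> 1 \<and> snd x \<ge> 1"
  using assms by (auto simp: chains_def)

lemma chains_single: "N \<ge> 1 \<Longrightarrow> M \<ge> 1 \<Longrightarrow> [(N,M)] \<in> chains N M"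
  by (auto simp: chains_def)

lemma chains_snoc:
  assumes "ps \<in> chains i j" "i < N" "j < M"
  shows "ps @ [(N,M)] \<in> chains N M"
proof -
  have "\<forall>x\<in>set ((0,0)#ps). cR x (N,M)"
    using chains_bound[OF assms(1)] assms(2,3) by fastforce
  moreover have "sorted_wrt cR ((0,0) # ps)" using assms(1) by (auto simp: chains_def)
  ultimately have "sorted_wrt cR (((0,0) # ps) @ [(N,M)])"
    by (simp only: sorted_wrt_append) auto
  then show ?thesis by (auto simp: chains_def)
qed

lemma chains_decomp:
  assumes "N \<ge> 1" "M \<ge> 1"
  shows "chains N M = insert [(N,M)] (\<Union>ij\<in>{1..<N}\<times>{1..<M}. (\<lambda>ps. ps @ [(N,M)]) ` chains (fst ij) (snd ij))"
proof (intro equalityI subsetI)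
  fix qs assume q: "qs \<in> chains N M"
  then have ne: "qs \<noteq> []" and l: "last qs = (N,M)" and s: "sorted_wrt cR ((0,0) # qs)"
    by (auto simp: chains_def)
  have eq: "qs = butlast qs @ [(N,M)]" using ne l by (metis append_butlast_last_id)
  show "qs \<in> insert [(N,M)] (\<Union>ij\<in>{1..<N}\<times>{1..<M}. (\<lambda>ps. ps @ [(N,M)]) ` chains (fst ij) (snd ij))"
  proof (cases "butlast qs = []")
    case True then show ?thesis using eq by auto
  next
    case False
    define ps where "ps = butlast qs"
    obtain i j where ij: "last ps = (i,j)" by (cases "last ps") auto
    have s2: "sorted_wrt cR (((0,0) # ps) @ [(N,M)])" using s eq ps_def by simp
    then have sps: "sorted_wrt cR ((0,0) # ps)" and all: "\<forall>x\<in>set ((0,0)#ps). cR x (N,M)"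
      by (simp_all only: sorted_wrt_append) auto
    have "(i,j) \<in> set ps" using False ij ps_def by (metis last_in_set)
    then have "i \<ge> 1" "j \<ge> 1" "i < N" "j < M" using sps all by fastforce+
    moreover have "ps \<in> chains i j" using False ij sps ps_def by (auto simp: chains_def)
    then have "qs \<in> (\<lambda>ps. ps @ [(N,M)]) ` chains i j" using eq ps_def by (metis image_eqI)
    ultimately show ?thesis by (intro insertI2 UN_I[of "(i,j)"]) auto
  qed
next
  fix qs assume "qs \<in> insert [(N,M)] (\<Union>ij\<in>{1..<N}\<times>{1..<M}. (\<lambda>ps. ps @ [(N,M)]) ` chains (fst ij) (snd ij))"
  then show "qs \<in> chains N M" using assms chains_single chains_snoc by fastforce
qed

lemma finite_chains: "finite (chains N M)"
proof -
  have "chains N M \<subseteq> {xs. set xs \<subseteq> {0..N}\<times>{0..M} \<and> length xs \<le> card ({0..N}\<times>{0..M})}"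
  proof
    fix ps assume p: "ps \<in> chains N M"
    have st: "set ps \<subseteq> {0..N}\<times>{0..M}" using chains_bound[OF p] by fastforce
    have "sorted_wrt cR ps" using p by (auto simp: chains_def)
    then have "distinct ps" by (induction ps) auto
    then have "length ps = card (set ps)" by (simp add: distinct_card)
    also have "\<dots> \<le> card ({0..N}\<times>{0..M})" by (rule card_mono[OF _ st]) auto
    finally show "ps \<in> {xs. set xs \<subseteq> {0..N}\<times>{0..M} \<and> length xs \<le> card ({0..N}\<times>{0..M})}"
      using st by auto
  qed
  moreover have "finite {xs. set xs \<subseteq> {0..N}\<times>{0..M} \<and> length xs \<le> card ({0..N}\<times>{0..M})}"
    by (rule finite_lists_length_le) auto
  ultimately show ?thesis by (rule finite_subset)
qed


lemma chain_prob_snoc: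
  assumes "ps \<in> chains i j"
  shows "chain_prob K (ps @ [(N,M)]) = chain_prob K ps * K (N - i + (M - j))"
proof -
  have ne: "ps \<noteq> []" and l: "last ps = (i,j)" using assms by (auto simp: chains_def)
  have "chain_prob K (ps @ [(N,M)]) = prod_list (map2 (\<lambda>p q. K ((fst q - fst p) + (snd q - snd p))) ((0, 0) # ps @ [(N,M)]) (ps @ [(N,M)]))"
    by (simp add: chain_prob_def)
  also have "\<dots> = chain_prob K ps * K (N - i + (M - j))"
    unfolding map2_snoc using ne l by (simp add: chain_prob_def)
  finally show ?thesis .
qed

lemma chain_prob_single: "chain_prob K [(N,M)] = K (N + M)"
  by (simp add: chain_prob_def)

lemma Zpart_rec:
  assumes "N \<ge> 1" "M \<ge> 1"
  shows "Zpart K \<beta> h w N M = exp (\<beta> * w (N,M) + h) *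
     (K (N + M) + (\<Sum>ij\<in>{1..<N}\<times>{1..<M}. Zpart K \<beta> h w (fst ij) (snd ij) * K (N - fst ij + (M - snd ij))))"
proof -
  let ?g = "\<lambda>ps. chain_prob K ps * exp (sum_list (map (\<lambda>p. \<beta> * w p + h) ps))"
  let ?U = "\<Union>ij\<in>{1..<N}\<times>{1..<M}. (\<lambda>ps. ps @ [(N,M)]) ` chains (fst ij) (snd ij)"
  have fin: "finite ?U" using finite_chains by auto
  have notin: "[(N,M)] \<notin> ?U" using chains_def by auto
  have "Zpart K \<beta> h w N M = sum ?g (insert [(N,M)] ?U)"
    unfolding Zpart_def using chains_decomp[OF assms] by simp
  also have "\<dots> = ?g [(N,M)] + sum ?g ?U" using fin notin by simp
  also have "sum ?g ?U = (\<Sum>ij\<in>{1..<N}\<times>{1..<M}. sum ?g ((\<lambda>ps. ps @ [(N,M)]) ` chains (fst ij) (snd ij)))"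
  proof (rule sum.UNION_disjoint)
    show "finite ({1..<N}\<times>{1..<M})" by simp
    show "\<forall>i\<in>{1..<N}\<times>{1..<M}. finite ((\<lambda>ps. ps @ [(N,M)]) ` chains (fst i) (snd i))"
      using finite_chains by auto
    show "\<forall>i\<in>{1..<N} \<times> {1..<M}. \<forall>j\<in>{1..<N} \<times> {1..<M}. i \<noteq> j \<longrightarrow>
      (\<lambda>ps. ps @ [(N, M)]) ` chains (fst i) (snd i) \<inter> (\<lambda>ps. ps @ [(N, M)]) ` chains (fst j) (snd j) = {}"
      by (auto simp: chains_def)
  qed
  also have "\<dots> = (\<Sum>ij\<in>{1..<N}\<times>{1..<M}. exp (\<beta> * w (N,M) + h) * (Zpart K \<beta> h w (fst ij) (snd ij) * K (N - fst ij + (M - snd ij))))"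
  proof (rule sum.cong[OF refl])
    fix ij assume "ij \<in> {1..<N}\<times>{1..<M}"
    have "sum ?g ((\<lambda>ps. ps @ [(N,M)]) ` chains (fst ij) (snd ij)) = sum (?g \<circ> (\<lambda>ps. ps @ [(N,M)])) (chains (fst ij) (snd ij))"
      by (rule sum.reindex) (auto simp: inj_on_def)
    also have "\<dots> = (\<Sum>ps\<in>chains (fst ij) (snd ij). exp (\<beta> * w (N,M) + h) * (?g ps * K (N - fst ij + (M - snd ij))))"
      by (rule sum.cong[OF refl]) (simp add: chain_prob_snoc exp_add algebra_simps)
    also have "\<dots> = exp (\<beta> * w (N,M) + h) * (Zpart K \<beta> h w (fst ij) (snd ij) * K (N - fst ij + (M - snd ij)))"
      by (simp add: Zpart_def sum_distrib_left sum_distrib_right)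
    finally show "sum ?g ((\<lambda>ps. ps @ [(N,M)]) ` chains (fst ij) (snd ij)) = exp (\<beta> * w (N,M) + h) * (Zpart K \<beta> h w (fst ij) (snd ij) * K (N - fst ij + (M - snd ij)))" .
  qed
  finally show ?thesis by (simp add: chain_prob_single sum_distrib_left algebra_simps)
qed

definition Zp :: "(nat \<Rightarrow> real) \<Rightarrow> real \<Rightarrow> real \<Rightarrow> (nat \<times> nat \<Rightarrow> real) \<Rightarrow> nat \<times> nat \<Rightarrow> real" where
  "Zp K \<beta> h w p = (if p = (0,0) then 1 else Zpart K \<beta> h w (fst p) (snd p))"

definition below :: "nat \<times> nat \<Rightarrow> (nat \<times> nat) set" where
  "below p = {..<fst p} \<times> {..<snd p}"

lemma Zpart_0: "fst p = 0 \<or> snd p = 0 \<Longrightarrow> Zpart K \<beta> h w (fst p) (snd p) = 0"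
  by (auto simp: Zpart_def chains_N0 chains_0M)

lemma Zpart_0M [simp]: "Zpart K \<beta> h w 0 M = 0" and Zpart_N0 [simp]: "Zpart K \<beta> h w N 0 = 0"
  by (auto simp: Zpart_def chains_N0 chains_0M)

lemma Zp_rec:
  assumes "p \<noteq> (0,0)"
  shows "Zp K \<beta> h w p = exp (\<beta> * w p + h) * (\<Sum>q\<in>below p. Zp K \<beta> h w q * K (fst p - fst q + (snd p - snd q)))"
proof (cases "fst p = 0 \<or> snd p = 0")
  case True
  then show ?thesis using assms by (auto simp: Zp_def Zpart_0 below_def)
next
  case False
  obtain N M where p: "p = (N,M)" by (cases p)
  with False have NM: "N \<ge> 1" "M \<ge> 1" by auto
  have split: "below p = insert (0,0) (({1..<N}\<times>{1..<M}) \<union> ({0}\<times>{1..<M} \<union> {1..<N}\<times>{0}))"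
    using p NM by (auto simp: below_def)
  let ?f = "\<lambda>q. Zp K \<beta> h w q * K (fst p - fst q + (snd p - snd q))"
  have z1: "sum ?f ({0}\<times>{1..<M}) = 0"
    by (rule sum.neutral) (auto simp: Zp_def Zpart_0)
  have z2: "sum ?f ({1..<N}\<times>{0}) = 0"
    by (rule sum.neutral) (auto simp: Zp_def Zpart_0)
  have z3: "sum ?f ({1..<N}\<times>{1..<M}) = (\<Sum>q\<in>{1..<N}\<times>{1..<M}. Zpart K \<beta> h w (fst q) (snd q) * K (N - fst q + (M - snd q)))"
    by (rule sum.cong) (auto simp: Zp_def p)
  have "sum ?f (below p) = ?f (0,0) + (sum ?f ({1..<N}\<times>{1..<M}) + (sum ?f ({0}\<times>{1..<M}) + sum ?f ({1..<N}\<times>{0})))"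
    unfolding split
    apply (subst sum.insert, simp, simp)
    apply (subst sum.union_disjoint, simp, simp, force)
    apply (subst sum.union_disjoint, simp, simp, force)
    apply simp
    done
  then have "sum ?f (below p) = K (N + M) + (\<Sum>q\<in>{1..<N}\<times>{1..<M}. Zpart K \<beta> h w (fst q) (snd q) * K (N - fst q + (M - snd q)))"
    using z1 z2 z3 by (simp add: Zp_def p)
  then show ?thesis using Zpart_rec[OF NM, of K \<beta> h w] p assms NM by (simp add: Zp_def)
qed


definition box :: "nat \<Rightarrow> (nat \<times> nat) set" where "box k = {..<k} \<times> {..<k}"
definition rect :: "nat \<times> nat \<Rightarrow> (nat \<times> nat) set" where "rect p = {..fst p} \<times> {..snd p}"
definition sh :: "nat \<times> nat \<Rightarrow> (nat \<times> nat \<Rightarrow> real) \<Rightarrow> nat \<times> nat \<Rightarrow> real" where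
  "sh e w = (\<lambda>q. w (fst q + fst e, snd q + snd e))"
definition psub :: "nat \<times> nat \<Rightarrow> nat \<times> nat \<Rightarrow> nat \<times> nat" where
  "psub p e = (fst p - fst e, snd p - snd e)"
definition Xe :: "(nat \<Rightarrow> real) \<Rightarrow> real \<Rightarrow> real \<Rightarrow> nat \<Rightarrow> (nat \<times> nat \<Rightarrow> real) \<Rightarrow> nat \<times> nat \<Rightarrow> real" where
  "Xe K \<beta> h k w e = exp (\<beta> * w e + h) * (\<Sum>q\<in>below e \<inter> box k. Zp K \<beta> h w q * K (fst e - fst q + (snd e - snd q)))"

lemma Zp_00 [simp]: "Zp K \<beta> h w (0,0) = 1" by (simp add: Zp_def)

lemma Zp_zero: "fst p = 0 \<or> snd p = 0 \<Longrightarrow> p \<noteq> (0,0) \<Longrightarrow> Zp K \<beta> h w p = 0"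
  by (auto simp: Zp_def Zpart_0)

lemma finite_below [simp]: "finite (below p)" by (simp add: below_def)
lemma finite_rect [simp]: "finite (rect p)" by (simp add: rect_def)
lemma finite_box [simp]: "finite (box k)" by (simp add: box_def)

lemma exit_decomp:
  assumes k: "k \<ge> 1"
  shows "p \<notin> box k \<Longrightarrow> Zp K \<beta> h w p = (\<Sum>e\<in>rect p - box k. Xe K \<beta> h k w e * Zp K \<beta> h (sh e w) (psub p e))"
proof (induction "fst p + snd p" arbitrary: p rule: less_induct)
  case less
  let ?Z = "Zp K \<beta> h"
  let ?X = "Xe K \<beta> h k w"
  let ?Kd = "\<lambda>p q. K (fst p - fst q + (snd p - snd q))"
  have p0: "p \<noteq> (0,0)" using less.prems k by (auto simp: box_def)
  have "?Z w p = exp (\<beta> * w p + h) * (\<Sum>q\<in>below p. ?Z w q * ?Kd p q)"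
    by (rule Zp_rec[OF p0])
  also have "(\<Sum>q\<in>below p. ?Z w q * ?Kd p q) = (\<Sum>q\<in>below p \<inter> box k. ?Z w q * ?Kd p q) + (\<Sum>q\<in>below p - box k. ?Z w q * ?Kd p q)"
    by (rule sum.Int_Diff[OF finite_below])
  finally have eq1: "?Z w p = ?X p + exp (\<beta> * w p + h) * (\<Sum>q\<in>below p - box k. ?Z w q * ?Kd p q)"
    by (simp add: Xe_def algebra_simps)
  have IH: "?Z w q = (\<Sum>e\<in>rect q - box k. ?X e * ?Z (sh e w) (psub q e))" if "q \<in> below p - box k" for q
    using that by (intro less.hyps) (auto simp: below_def)
  have "(\<Sum>q\<in>below p - box k. ?Z w q * ?Kd p q) = (\<Sum>q\<in>below p - box k. \<Sum>e\<in>{e\<in>below p - box k. fst e \<le> fst q \<and> snd e \<le> snd q}. ?X e * ?Z (sh e w) (psub q e) * ?Kd p q)"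
  proof (rule sum.cong[OF refl])
    fix q assume q: "q \<in> below p - box k"
    have "rect q - box k = {e\<in>below p - box k. fst e \<le> fst q \<and> snd e \<le> snd q}"
      using q by (auto simp: rect_def below_def)
    then show "?Z w q * ?Kd p q = (\<Sum>e\<in>{e\<in>below p - box k. fst e \<le> fst q \<and> snd e \<le> snd q}. ?X e * ?Z (sh e w) (psub q e) * ?Kd p q)"
      using IH[OF q] by (simp add: sum_distrib_right)
  qed
  also have "\<dots> = (\<Sum>e\<in>below p - box k. \<Sum>q\<in>{q\<in>below p - box k. fst e \<le> fst q \<and> snd e \<le> snd q}. ?X e * ?Z (sh e w) (psub q e) * ?Kd p q)"
    by (rule sum.swap_restrict) auto
  also have "\<dots> = (\<Sum>e\<in>below p - box k. ?X e * (\<Sum>q'\<in>below (psub p e). ?Z (sh e w) q' * ?Kd (psub p e) q'))"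
  proof (rule sum.cong[OF refl])
    fix e assume e: "e \<in> below p - box k"
    have "(\<Sum>q\<in>{q\<in>below p - box k. fst e \<le> fst q \<and> snd e \<le> snd q}. ?X e * ?Z (sh e w) (psub q e) * ?Kd p q)
        = (\<Sum>q'\<in>below (psub p e). ?X e * ?Z (sh e w) (psub (fst q' + fst e, snd q' + snd e) e) * ?Kd p (fst q' + fst e, snd q' + snd e))"
      using e
      by (intro sum.reindex_bij_witness[of _ "\<lambda>q'. (fst q' + fst e, snd q' + snd e)" "\<lambda>q. psub q e"])
         (auto simp: below_def psub_def box_def)
    also have "\<dots> = ?X e * (\<Sum>q'\<in>below (psub p e). ?Z (sh e w) q' * ?Kd (psub p e) q')"
      using e by (auto simp: sum_distrib_left below_def psub_def add_ac intro!: sum.cong)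
    finally show "(\<Sum>q\<in>{q\<in>below p - box k. fst e \<le> fst q \<and> snd e \<le> snd q}. ?X e * ?Z (sh e w) (psub q e) * ?Kd p q)
        = ?X e * (\<Sum>q'\<in>below (psub p e). ?Z (sh e w) q' * ?Kd (psub p e) q')" .
  qed
  finally have eq2: "exp (\<beta> * w p + h) * (\<Sum>q\<in>below p - box k. ?Z w q * ?Kd p q) = (\<Sum>e\<in>below p - box k. ?X e * ?Z (sh e w) (psub p e))"
  proof -
    assume A: "(\<Sum>q\<in>below p - box k. ?Z w q * ?Kd p q) = (\<Sum>e\<in>below p - box k. ?X e * (\<Sum>q'\<in>below (psub p e). ?Z (sh e w) q' * ?Kd (psub p e) q'))"
    have "exp (\<beta> * w p + h) * (\<Sum>q\<in>below p - box k. ?Z w q * ?Kd p q) =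
       (\<Sum>e\<in>below p - box k. ?X e * (exp (\<beta> * sh e w (psub p e) + h) * (\<Sum>q'\<in>below (psub p e). ?Z (sh e w) q' * ?Kd (psub p e) q')))"
      unfolding A sum_distrib_left
      by (intro sum.cong refl) (auto simp: sh_def psub_def below_def)
    also have "\<dots> = (\<Sum>e\<in>below p - box k. ?X e * ?Z (sh e w) (psub p e))"
      by (intro sum.cong refl arg_cong2[where f="(*)"] Zp_rec[symmetric]) (auto simp: psub_def below_def)
    finally show ?thesis .
  qed
  have "(\<Sum>e\<in>rect p - box k. ?X e * ?Z (sh e w) (psub p e)) =
     (\<Sum>e\<in>insert p (below p - box k). ?X e * ?Z (sh e w) (psub p e))"
  proof (rule sum.mono_neutral_right)
    show "insert p (below p - box k) \<subseteq> rect p - box k" using less.prems by (auto simp: rect_def below_def mem_Times_iff)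
    show "\<forall>e\<in>rect p - box k - insert p (below p - box k). ?X e * ?Z (sh e w) (psub p e) = 0"
      by (auto simp: rect_def below_def psub_def intro!: Zp_zero)
  qed simp
  also have "\<dots> = ?X p + (\<Sum>e\<in>below p - box k. ?X e * ?Z (sh e w) (psub p e))"
    by (subst sum.insert) (auto simp: below_def psub_def)
  finally show ?case using eq1 eq2 by simp
qed


definition reg :: "nat \<times> nat \<Rightarrow> (nat \<times> nat) set" where
  "reg q = {1..fst q} \<times> {1..snd q}"

lemma finite_reg [simp]: "finite (reg q)" by (simp add: reg_def)

lemma sum_list_meas:
  fixes \<beta> h :: real and V :: "'x \<Rightarrow> 'p \<Rightarrow> real"
  assumes "\<And>p. (\<lambda>r. V r p) \<in> borel_measurable Mx"
  shows "(\<lambda>r. sum_list (map (\<lambda>p. \<beta> * V r p + h) ps)) \<in> borel_measurable Mx"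
  using assms
proof (induction ps)
  case (Cons a ps)
  have [measurable]: "(\<lambda>r. V r a) \<in> borel_measurable Mx" by (rule Cons.prems)
  have [measurable]: "(\<lambda>r. sum_list (map (\<lambda>p. \<beta> * V r p + h) ps)) \<in> borel_measurable Mx" by (rule Cons.IH[OF Cons.prems])
  show ?case by simp measurable
qed simp

lemma Zp_meas:
  assumes "\<And>p. (\<lambda>r. V r p) \<in> borel_measurable Mx"
  shows "(\<lambda>r. Zp K \<beta> h (V r) q) \<in> borel_measurable Mx"
proof -
  have "(\<lambda>r. Zpart K \<beta> h (V r) (fst q) (snd q)) \<in> borel_measurable Mx"
    unfolding Zpart_def
    by (intro borel_measurable_sum borel_measurable_times borel_measurable_const
          borel_measurable_exp[THEN measurable_compose_rev] sum_list_meas assms)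
  then show ?thesis unfolding Zp_def by simp
qed

lemma Zp_local:
  assumes "\<And>s. s \<in> reg q \<Longrightarrow> w s = w' s"
  shows "Zp K \<beta> h w q = Zp K \<beta> h w' q"
proof -
  have "Zpart K \<beta> h w (fst q) (snd q) = Zpart K \<beta> h w' (fst q) (snd q)"
    unfolding Zpart_def
  proof (intro sum.cong refl arg_cong2[where f="(*)"] arg_cong[where f=exp] arg_cong[where f=sum_list] map_cong)
    fix ps s assume ps: "ps \<in> chains (fst q) (snd q)" and s: "s \<in> set ps"
    have "s \<in> reg q" using chains_bound[OF ps, of s] chains_pos[OF ps s] s by (auto simp: reg_def mem_Times_iff)
    then show "\<beta> * w s + h = \<beta> * w' s + h" using assms by simp
  qed
  then show ?thesis by (simp add: Zp_def)
qed

lemma Zp_nonneg: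
  assumes K: "\<forall>n\<ge>2. K n \<ge> 0"
  shows "Zp K \<beta> h w p \<ge> 0"
proof (induction "fst p + snd p" arbitrary: p rule: less_induct)
  case less
  show ?case
  proof (cases "p = (0,0)")
    case True then show ?thesis by simp
  next
    case False
    have "(\<Sum>q\<in>below p. Zp K \<beta> h w q * K (fst p - fst q + (snd p - snd q))) \<ge> 0"
    proof (intro sum_nonneg mult_nonneg_nonneg)
      fix q assume q: "q \<in> below p"
      then show "Zp K \<beta> h w q \<ge> 0" by (intro less.hyps) (auto simp: below_def)
      show "K (fst p - fst q + (snd p - snd q)) \<ge> 0" using q K by (auto simp: below_def)
    qed
    then show ?thesis using Zp_rec[OF False, of K \<beta> h w] by simp
  qed
qed

lemma le_powr_small:
  fixes x d :: real
  assumes "0 \<le> x" "x \<le> 1" "0 < d" "d \<le> 1"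
  shows "x \<le> x powr d"
  using powr_mono'[of d 1 x] assms by (cases "x = 0") auto

lemma powr_add_le:
  fixes a b d :: real
  assumes "a \<ge> 0" "b \<ge> 0" "0 < d" "d \<le> 1"
  shows "(a + b) powr d \<le> a powr d + b powr d"
proof (cases "a + b = 0")
  case True then show ?thesis using assms by simp
next
  case False
  then have s: "a + b > 0" using assms by simp
  have "a / (a+b) \<le> (a / (a+b)) powr d"
    using assms s by (intro le_powr_small) (auto simp: divide_simps)
  moreover have "b / (a+b) \<le> (b / (a+b)) powr d"
    using assms s by (intro le_powr_small) (auto simp: divide_simps)
  moreover have "a / (a+b) + b / (a+b) = 1" using s by (simp add: add_divide_distrib[symmetric])
  ultimately have "1 \<le> (a / (a+b)) powr d + (b / (a+b)) powr d"
    by linarith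
  also have "\<dots> = (a powr d + b powr d) / (a+b) powr d"
    using assms s by (simp add: powr_divide add_divide_distrib)
  finally show ?thesis using s by (simp add: divide_simps)
qed

lemma powr_sum_le:
  fixes f :: "'b \<Rightarrow> real"
  assumes "\<And>i. i \<in> S \<Longrightarrow> f i \<ge> 0" "0 < d" "d \<le> 1"
  shows "(sum f S) powr d \<le> (\<Sum>i\<in>S. f i powr d)"
  using assms
proof (induction S rule: infinite_finite_induct)
  case (insert x F)
  have "sum f (insert x F) powr d = (f x + sum f F) powr d" using insert by simp
  also have "\<dots> \<le> f x powr d + sum f F powr d"
    using insert by (intro powr_add_le sum_nonneg) auto
  also have "\<dots> \<le> f x powr d + (\<Sum>i\<in>F. f i powr d)" using insert by simp
  finally show ?case using insert by simp
qed auto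


locale pset = prob_space P for P :: "'a measure" +
  fixes \<omega> :: "nat \<times> nat \<Rightarrow> 'a \<Rightarrow> real"
  assumes indep: "indep_vars (\<lambda>_. borel) \<omega> UNIV"
    and ident: "\<forall>p. distr P borel (\<omega> p) = distr P borel (\<omega> (1, 1))"
begin

lemma rv[measurable]: "\<omega> p \<in> borel_measurable P"
  using indep by (cases p) (auto simp: indep_vars_def)

lemma indep_prod:
  fixes f g :: "(nat \<times> nat \<Rightarrow> real) \<Rightarrow> real"
  assumes IJ: "I \<inter> J = {}"
    and f: "f \<in> borel_measurable (PiM I (\<lambda>_. borel))" and g: "g \<in> borel_measurable (PiM J (\<lambda>_. borel))"
    and fi: "integrable P (\<lambda>x. f (restrict (\<lambda>p. \<omega> p x) I))"
    and gi: "integrable P (\<lambda>x. g (restrict (\<lambda>p. \<omega> p x) J))"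
  shows "integrable P (\<lambda>x. f (restrict (\<lambda>p. \<omega> p x) I) * g (restrict (\<lambda>p. \<omega> p x) J))"
    and "expectation (\<lambda>x. f (restrict (\<lambda>p. \<omega> p x) I) * g (restrict (\<lambda>p. \<omega> p x) J)) =
         expectation (\<lambda>x. f (restrict (\<lambda>p. \<omega> p x) I)) * expectation (\<lambda>x. g (restrict (\<lambda>p. \<omega> p x) J))"
proof -
  have "indep_var (PiM I (\<lambda>_. borel)) (\<lambda>x. restrict (\<lambda>p. \<omega> p x) I) (PiM J (\<lambda>_. borel)) (\<lambda>x. restrict (\<lambda>p. \<omega> p x) J)"
    by (rule indep_var_restrict[OF indep IJ]) auto
  then have iv: "indep_var borel (f \<circ> (\<lambda>x. restrict (\<lambda>p. \<omega> p x) I)) borel (g \<circ> (\<lambda>x. restrict (\<lambda>p. \<omega> p x) J))"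
    by (rule indep_var_compose[OF _ f g])
  have fi': "integrable P (f \<circ> (\<lambda>x. restrict (\<lambda>p. \<omega> p x) I))" using fi by (simp add: comp_def)
  have gi': "integrable P (g \<circ> (\<lambda>x. restrict (\<lambda>p. \<omega> p x) J))" using gi by (simp add: comp_def)
  show "integrable P (\<lambda>x. f (restrict (\<lambda>p. \<omega> p x) I) * g (restrict (\<lambda>p. \<omega> p x) J))"
    using indep_var_integrable[OF iv fi' gi'] by (simp add: comp_def)
  show "expectation (\<lambda>x. f (restrict (\<lambda>p. \<omega> p x) I) * g (restrict (\<lambda>p. \<omega> p x) J)) =
         expectation (\<lambda>x. f (restrict (\<lambda>p. \<omega> p x) I)) * expectation (\<lambda>x. g (restrict (\<lambda>p. \<omega> p x) J))"
    using indep_var_lebesgue_integral[OF iv fi' gi'] by (simp add: comp_def)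
qed

abbreviation "D \<equiv> distr P borel (\<omega> (1,1))"

lemma distr_block:
  assumes B: "finite B" "B \<noteq> {}" and T: "inj_on T B"
  shows "distr P (PiM B (\<lambda>_. borel)) (\<lambda>x. \<lambda>s\<in>B. \<omega> (T s) x) = PiM B (\<lambda>_. D)"
proof -
  interpret Dp: prob_space D by (rule prob_space_distr) simp
  have iv: "indep_vars (\<lambda>_. borel) \<omega> (T ` B)" by (rule indep_vars_subset[OF indep]) auto
  have TB: "T ` B \<noteq> {}" using B by auto
  have d1: "distr P (PiM (T ` B) (\<lambda>_. borel)) (\<lambda>x. \<lambda>q\<in>T ` B. \<omega> q x) = PiM (T ` B) (\<lambda>q. distr P borel (\<omega> q))"
    using indep_vars_iff_distr_eq_PiM[OF TB, where M'="\<lambda>_. borel" and X=\<omega>] iv by simp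
  also have "\<dots> = PiM (T ` B) (\<lambda>_. D)"
    using ident by (intro PiM_cong) auto
  finally have d1': "distr P (PiM (T ` B) (\<lambda>_. D)) (\<lambda>x. \<lambda>q\<in>T ` B. \<omega> q x) = PiM (T ` B) (\<lambda>_. D)"
  proof -
    assume a: "distr P (PiM (T ` B) (\<lambda>_. borel)) (\<lambda>x. \<lambda>q\<in>T ` B. \<omega> q x) = PiM (T ` B) (\<lambda>_. D)"
    have "distr P (PiM (T ` B) (\<lambda>_. D)) (\<lambda>x. \<lambda>q\<in>T ` B. \<omega> q x) = distr P (PiM (T ` B) (\<lambda>_. borel)) (\<lambda>x. \<lambda>q\<in>T ` B. \<omega> q x)"
      by (intro distr_cong refl sets_PiM_cong) auto
    then show ?thesis using a by simp
  qed
  have Xm: "(\<lambda>x. \<lambda>q\<in>T ` B. \<omega> q x) \<in> measurable P (PiM (T ` B) (\<lambda>_. D))"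
  proof -
    have "(\<lambda>x. \<lambda>q\<in>T ` B. \<omega> q x) \<in> measurable P (PiM (T ` B) (\<lambda>_. borel))" by measurable
    moreover have "measurable P (PiM (T ` B) (\<lambda>_. borel)) = measurable P (PiM (T ` B) (\<lambda>_. D))"
      by (intro measurable_cong_sets refl sets_PiM_cong) auto
    ultimately show ?thesis by simp
  qed
  have tm: "(\<lambda>\<omega>'. \<lambda>n\<in>B. \<omega>' (T n)) \<in> measurable (PiM (T ` B) (\<lambda>_. D)) (PiM B (\<lambda>_. D))"
    by (intro measurable_restrict measurable_component_singleton) auto
  have "distr P (PiM B (\<lambda>_. borel)) (\<lambda>x. \<lambda>s\<in>B. \<omega> (T s) x) =
        distr P (PiM B (\<lambda>_. D)) ((\<lambda>\<omega>'. \<lambda>n\<in>B. \<omega>' (T n)) \<circ> (\<lambda>x. \<lambda>q\<in>T ` B. \<omega> q x))"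
    by (intro distr_cong refl sets_PiM_cong) (auto simp: fun_eq_iff)
  also have "\<dots> = distr (distr P (PiM (T ` B) (\<lambda>_. D)) (\<lambda>x. \<lambda>q\<in>T ` B. \<omega> q x)) (PiM B (\<lambda>_. D)) (\<lambda>\<omega>'. \<lambda>n\<in>B. \<omega>' (T n))"
    by (rule distr_distr[OF tm Xm, symmetric])
  also have "\<dots> = distr (PiM (T ` B) (\<lambda>_. D)) (PiM B (\<lambda>_. D)) (\<lambda>\<omega>'. \<lambda>n\<in>B. \<omega>' (T n))"
    using d1' by simp
  also have "\<dots> = PiM B (\<lambda>_. D)"
    using distr_PiM_reindex[of "T ` B" "\<lambda>_. D" T B] T Dp.prob_space_axioms by auto
  finally show ?thesis .
qed

lemma block_integral:
  fixes f :: "(nat \<times> nat \<Rightarrow> real) \<Rightarrow> real"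
  assumes B: "finite B" "B \<noteq> {}" and T: "inj_on T B"
    and f[measurable]: "f \<in> borel_measurable (PiM B (\<lambda>_. borel))"
  shows "expectation (\<lambda>x. f (\<lambda>s\<in>B. \<omega> (T s) x)) = expectation (\<lambda>x. f (\<lambda>s\<in>B. \<omega> s x))"
    and "integrable P (\<lambda>x. f (\<lambda>s\<in>B. \<omega> (T s) x)) \<longleftrightarrow> integrable P (\<lambda>x. f (\<lambda>s\<in>B. \<omega> s x))"
proof -
  have m1: "(\<lambda>x. \<lambda>s\<in>B. \<omega> (T s) x) \<in> measurable P (PiM B (\<lambda>_. borel))" by measurable
  have m2: "(\<lambda>x. \<lambda>s\<in>B. \<omega> s x) \<in> measurable P (PiM B (\<lambda>_. borel))" by measurable
  have e1: "distr P (PiM B (\<lambda>_. borel)) (\<lambda>x. \<lambda>s\<in>B. \<omega> (T s) x) = PiM B (\<lambda>_. D)"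
    by (rule distr_block[OF B T])
  have e2: "distr P (PiM B (\<lambda>_. borel)) (\<lambda>x. \<lambda>s\<in>B. \<omega> (id s) x) = PiM B (\<lambda>_. D)"
    by (rule distr_block[OF B]) simp
  show "expectation (\<lambda>x. f (\<lambda>s\<in>B. \<omega> (T s) x)) = expectation (\<lambda>x. f (\<lambda>s\<in>B. \<omega> s x))"
    using integral_distr[OF m1 f] integral_distr[OF m2 f] e1 e2 by simp
  show "integrable P (\<lambda>x. f (\<lambda>s\<in>B. \<omega> (T s) x)) \<longleftrightarrow> integrable P (\<lambda>x. f (\<lambda>s\<in>B. \<omega> s x))"
    using integrable_distr_eq[OF m1 f] integrable_distr_eq[OF m2 f] e1 e2 by simp
qed

lemma single_integral:
  fixes f :: "real \<Rightarrow> real"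
  assumes f[measurable]: "f \<in> borel_measurable borel"
  shows "expectation (\<lambda>x. f (\<omega> p x)) = expectation (\<lambda>x. f (\<omega> (1,1) x))"
    and "integrable P (\<lambda>x. f (\<omega> p x)) \<longleftrightarrow> integrable P (\<lambda>x. f (\<omega> (1,1) x))"
  using integral_distr[OF rv f, of p] integral_distr[OF rv f, of "(1,1)"]
    integrable_distr_eq[OF rv f, of p] integrable_distr_eq[OF rv f, of "(1,1)"] ident
  by metis+

end


locale zset = pset P \<omega> for P :: "'a measure" and \<omega> :: "nat \<times> nat \<Rightarrow> 'a \<Rightarrow> real" +
  fixes K :: "nat \<Rightarrow> real" and \<beta> h \<delta> :: real
  assumes Knn: "\<forall>n\<ge>2. K n \<ge> 0"
    and dpos: "0 < \<delta>" and dle: "\<delta> < 1"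
    and expmom: "\<forall>b::real. integrable P (\<lambda>x. exp (b * \<omega> (1, 1) x))"
begin

definition "Zx q x = Zp K \<beta> h (\<lambda>p. \<omega> p x) q"
definition "A q = expectation (\<lambda>x. Zx q x powr \<delta>)"
definition "ZT T q r = Zp K \<beta> h (\<lambda>s. if s \<in> reg q then r (T s) else 0) q"
definition "cc = expectation (\<lambda>x. exp (\<delta> * (\<beta> * \<omega> (1, 1) x + h)))"

lemma ZT_meas:
  assumes "T ` reg q \<subseteq> J"
  shows "ZT T q \<in> borel_measurable (PiM J (\<lambda>_. borel))"
  unfolding ZT_def
proof (rule Zp_meas)
  fix s
  show "(\<lambda>r. if s \<in> reg q then r (T s) else 0) \<in> borel_measurable (PiM J (\<lambda>_. borel))"
  proof (cases "s \<in> reg q")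
    case True
    then have "T s \<in> J" using assms by auto
    then show ?thesis using True by (simp add: measurable_component_singleton)
  qed simp
qed

lemma ZT_val:
  assumes "T ` reg q \<subseteq> J"
  shows "ZT T q (restrict (\<lambda>p. \<omega> p x) J) = Zp K \<beta> h (\<lambda>s. \<omega> (T s) x) q"
  unfolding ZT_def using assms by (intro Zp_local) auto

lemma Zx_meas[measurable]: "Zx q \<in> borel_measurable P"
  unfolding Zx_def[abs_def] by (rule Zp_meas) simp

lemma Zx_nonneg: "Zx q x \<ge> 0"
  unfolding Zx_def using Knn by (rule Zp_nonneg)

lemma exp_integrable: "integrable P (\<lambda>x. exp (b * \<omega> p x + a))"
proof -
  have "integrable P (\<lambda>x. exp (b * \<omega> p x))"
    using single_integral(2)[of "\<lambda>y. exp (b * y)" p] expmom by simp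
  then have "integrable P (\<lambda>x. exp a * exp (b * \<omega> p x))" by simp
  then show ?thesis by (simp add: exp_add mult.commute)
qed

lemma Zx_integrable: "integrable P (Zx q)"
proof (induction "fst q + snd q" arbitrary: q rule: less_induct)
  case less
  show ?case
  proof (cases "q = (0,0)")
    case True
    have "Zx (0,0) = (\<lambda>x. 1)" by (simp add: Zx_def fun_eq_iff)
    then show ?thesis using True by simp
  next
    case False
    have eq: "Zx q x = (\<Sum>q'\<in>below q. K (fst q - fst q' + (snd q - snd q')) * (exp (\<beta> * \<omega> q x + h) * Zx q' x))" for x
      unfolding Zx_def Zp_rec[OF False] by (simp add: sum_distrib_left algebra_simps)
    have T: "integrable P (\<lambda>x. exp (\<beta> * \<omega> q x + h) * Zx q' x)" if q': "q' \<in> below q" for q'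
    proof -
      have IH: "integrable P (Zx q')" using q' by (intro less.hyps) (auto simp: below_def)
      have d: "{q} \<inter> reg q' = {}" using q' by (auto simp: below_def reg_def)
      have f: "(\<lambda>r. exp (\<beta> * r q + h)) \<in> borel_measurable (PiM {q} (\<lambda>_. borel))" by measurable
      have g: "ZT id q' \<in> borel_measurable (PiM (reg q') (\<lambda>_. borel))" by (rule ZT_meas) simp
      have gv: "ZT id q' (restrict (\<lambda>p. \<omega> p x) (reg q')) = Zx q' x" for x
        using ZT_val[of id q' "reg q'" x] by (simp add: Zx_def)
      have "integrable P (\<lambda>x. exp (\<beta> * restrict (\<lambda>p. \<omega> p x) {q} q + h) * ZT id q' (restrict (\<lambda>p. \<omega> p x) (reg q')))"
        by (rule indep_prod(1)[OF d f g]) (simp_all add: gv IH exp_integrable)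
      then show "integrable P (\<lambda>x. exp (\<beta> * \<omega> q x + h) * Zx q' x)" by (simp add: gv)
    qed
    have "integrable P (\<lambda>x. \<Sum>q'\<in>below q. K (fst q - fst q' + (snd q - snd q')) * (exp (\<beta> * \<omega> q x + h) * Zx q' x))"
      apply (rule Bochner_Integration.integrable_sum)
      apply (rule integrable_mult_right)
      apply (rule T)
      apply assumption
      done
    then show ?thesis by (simp add: eq[abs_def])
  qed
qed

lemma powr_le_1_plus: "(z::real) \<ge> 0 \<Longrightarrow> z powr \<delta> \<le> 1 + z"
proof (cases "z \<le> 1")
  case True
  assume z: "z \<ge> 0"
  have "z powr \<delta> \<le> 1" using True z dpos by (intro powr_le1) auto
  then show ?thesis using z by simp
next
  case False
  then have "z powr \<delta> \<le> z powr 1" using dle by (intro powr_mono) auto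
  then show ?thesis using False by simp
qed

lemma Zx_pow_integrable: "integrable P (\<lambda>x. Zx q x powr \<delta>)"
proof (rule Bochner_Integration.integrable_bound)
  show "integrable P (\<lambda>x. 1 + Zx q x)" using Zx_integrable by simp
  show "(\<lambda>x. Zx q x powr \<delta>) \<in> borel_measurable P" by measurable
  show "AE x in P. norm (Zx q x powr \<delta>) \<le> norm (1 + Zx q x)"
    using Zx_nonneg powr_le_1_plus by (auto intro!: AE_I2 simp: abs_of_nonneg add_nonneg_nonneg)
qed

lemma A_nonneg: "A q \<ge> 0"
  unfolding A_def by (rule integral_nonneg_AE) auto

lemma Zp_const: "fst q = 0 \<or> snd q = 0 \<Longrightarrow> Zp K \<beta> h w q = (if q = (0,0) then 1 else 0)"
  using Zp_zero by auto

lemma A_shift: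
  "integrable P (\<lambda>x. Zp K \<beta> h (sh e (\<lambda>p. \<omega> p x)) d powr \<delta>) \<and>
   expectation (\<lambda>x. Zp K \<beta> h (sh e (\<lambda>p. \<omega> p x)) d powr \<delta>) = A d"
proof (cases "fst d = 0 \<or> snd d = 0")
  case True
  then show ?thesis using Zp_const[OF True] by (simp add: A_def Zx_def prob_space)
next
  case False
  let ?T = "\<lambda>s::nat\<times>nat. (fst s + fst e, snd s + snd e)"
  let ?f = "\<lambda>r. ZT id d r powr \<delta>"
  have B: "finite (reg d)" "reg d \<noteq> {}" using False by (auto simp: reg_def)
  have T: "inj_on ?T (reg d)" by (auto simp: inj_on_def)
  have f: "?f \<in> borel_measurable (PiM (reg d) (\<lambda>_. borel))"
    using ZT_meas[of id d "reg d"] by measurable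
  have v1: "?f (\<lambda>s\<in>reg d. \<omega> (?T s) x) = Zp K \<beta> h (sh e (\<lambda>p. \<omega> p x)) d powr \<delta>" for x
    unfolding ZT_def sh_def by (intro arg_cong2[where f="(powr)"] Zp_local refl) auto
  have v2: "?f (\<lambda>s\<in>reg d. \<omega> s x) = Zx d x powr \<delta>" for x
    unfolding ZT_def Zx_def by (intro arg_cong2[where f="(powr)"] Zp_local refl) auto
  show ?thesis
    using block_integral[OF B T f] Zx_pow_integrable[of d] by (simp add: v1 v2 A_def)
qed

lemma term_exp:
  assumes q: "q \<in> below e"
  shows "integrable P (\<lambda>x. exp (\<delta> * (\<beta> * \<omega> e x + h)) * Zx q x powr \<delta> * Zp K \<beta> h (sh e (\<lambda>p. \<omega> p x)) d powr \<delta>)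
     \<and> expectation (\<lambda>x. exp (\<delta> * (\<beta> * \<omega> e x + h)) * Zx q x powr \<delta> * Zp K \<beta> h (sh e (\<lambda>p. \<omega> p x)) d powr \<delta>) = cc * A q * A d"
proof -
  have d: "{e} \<inter> reg q = {}" using q by (auto simp: below_def reg_def)
  have f: "(\<lambda>r. exp (\<delta> * (\<beta> * r e + h))) \<in> borel_measurable (PiM {e} (\<lambda>_. borel))" by measurable
  have g: "(\<lambda>r. ZT id q r powr \<delta>) \<in> borel_measurable (PiM (reg q) (\<lambda>_. borel))"
    using ZT_meas[of id q "reg q"] by measurable
  have gv: "ZT id q (restrict (\<lambda>p. \<omega> p x) (reg q)) = Zx q x" for x
    using ZT_val[of id q "reg q" x] by (simp add: Zx_def)
  have ei: "integrable P (\<lambda>x. exp (\<delta> * (\<beta> * \<omega> e x + h)))"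
    using exp_integrable[of "\<delta> * \<beta>" e "\<delta> * h"] by (simp add: algebra_simps)
  have ee: "expectation (\<lambda>x. exp (\<delta> * (\<beta> * \<omega> e x + h))) = cc"
    unfolding cc_def by (rule single_integral(1)) simp
  have I2: "integrable P (\<lambda>x. exp (\<delta> * (\<beta> * \<omega> e x + h)) * Zx q x powr \<delta>)"
   and E2: "expectation (\<lambda>x. exp (\<delta> * (\<beta> * \<omega> e x + h)) * Zx q x powr \<delta>) = cc * A q"
    using indep_prod[OF d f g] ei Zx_pow_integrable[of q] by (simp_all add: gv ee A_def)
  show ?thesis
  proof (cases "fst d = 0 \<or> snd d = 0")
    case True
    then show ?thesis using Zp_const[OF True] I2 E2
      by (cases "d = (0,0)") (simp_all add: A_def Zx_def prob_space)
  next
    case False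
    let ?T = "\<lambda>s::nat\<times>nat. (fst s + fst e, snd s + snd e)"
    let ?I1 = "insert e (reg q)"
    define J where "J = ?T ` reg d"
    have dj: "?I1 \<inter> J = {}" using q by (auto simp:  J_def reg_def below_def prod_eq_iff)
    have f1: "(\<lambda>r. exp (\<delta> * (\<beta> * r e + h)) * ZT id q r powr \<delta>) \<in> borel_measurable (PiM ?I1 (\<lambda>_. borel))"
    proof -
      have m: "ZT id q \<in> borel_measurable (PiM ?I1 (\<lambda>_. borel))" by (rule ZT_meas) auto
      show ?thesis using m by measurable
    qed
    have g1: "(\<lambda>r. ZT ?T d r powr \<delta>) \<in> borel_measurable (PiM J (\<lambda>_. borel))"
      using ZT_meas[of ?T d J] by (measurable, auto simp: J_def)
    have v1: "ZT id q (restrict (\<lambda>p. \<omega> p x) ?I1) = Zx q x" for x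
        using ZT_val[of id q ?I1 x] by (auto simp: Zx_def)
    have v2: "ZT ?T d (restrict (\<lambda>p. \<omega> p x) J) powr \<delta> = Zp K \<beta> h (sh e (\<lambda>p. \<omega> p x)) d powr \<delta>" for x
      using ZT_val[of ?T d J x] by (simp add: J_def sh_def)
    show ?thesis
      using indep_prod[OF dj f1 g1] I2 E2 A_shift[of e d] by (simp add: v1 v2)
  qed
qed

end


lemma exp_powr: "exp (y::real) powr (d::real) = exp (d * y)"
  by (simp add: powr_def)

context zset
begin

lemma Kd_nonneg: "q \<in> below e \<Longrightarrow> K (fst e - fst q + (snd e - snd q)) \<ge> 0"
  using Knn by (auto simp: below_def)

lemma Zp_nn: "Zp K \<beta> h w p \<ge> 0"
  using Knn by (rule Zp_nonneg)

lemma Xe_nonneg: "Xe K \<beta> h k w e \<ge> 0"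
  unfolding Xe_def by (intro mult_nonneg_nonneg sum_nonneg Zp_nn Kd_nonneg) auto

lemma pointwise:
  assumes k: "k \<ge> 1" and p: "p \<notin> box k"
  shows "Zx p x powr \<delta> \<le> (\<Sum>e\<in>rect p - box k. \<Sum>q\<in>below e \<inter> box k.
     K (fst e - fst q + (snd e - snd q)) powr \<delta> *
       (exp (\<delta> * (\<beta> * \<omega> e x + h)) * Zx q x powr \<delta> * Zp K \<beta> h (sh e (\<lambda>s. \<omega> s x)) (psub p e) powr \<delta>))"
proof -
  let ?W = "\<lambda>s. \<omega> s x"
  let ?Zs = "\<lambda>e. Zp K \<beta> h (sh e ?W) (psub p e)"
  let ?X = "Xe K \<beta> h k ?W"
  have "Zx p x = (\<Sum>e\<in>rect p - box k. ?X e * ?Zs e)"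
    unfolding Zx_def by (rule exit_decomp[OF k p])
  then have "Zx p x powr \<delta> \<le> (\<Sum>e\<in>rect p - box k. (?X e * ?Zs e) powr \<delta>)"
    using dpos dle by (simp only:) (intro powr_sum_le mult_nonneg_nonneg Xe_nonneg Zp_nn, auto)
  also have "\<dots> \<le> (\<Sum>e\<in>rect p - box k. \<Sum>q\<in>below e \<inter> box k.
     K (fst e - fst q + (snd e - snd q)) powr \<delta> *
       (exp (\<delta> * (\<beta> * \<omega> e x + h)) * Zx q x powr \<delta> * ?Zs e powr \<delta>))"
  proof (rule sum_mono)
    fix e assume e: "e \<in> rect p - box k"
    have eq1: "(?X e * ?Zs e) powr \<delta> = ?X e powr \<delta> * ?Zs e powr \<delta>"
      by (intro powr_mult Xe_nonneg Zp_nn)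
    have eq2: "?X e powr \<delta> = exp (\<delta> * (\<beta> * \<omega> e x + h)) *
       (\<Sum>q\<in>below e \<inter> box k. Zp K \<beta> h ?W q * K (fst e - fst q + (snd e - snd q))) powr \<delta>"
    proof -
      have S0: "(\<Sum>q\<in>below e \<inter> box k. Zp K \<beta> h ?W q * K (fst e - fst q + (snd e - snd q))) \<ge> 0"
        by (intro sum_nonneg mult_nonneg_nonneg Zp_nn Kd_nonneg) auto
      then show ?thesis by (simp add: Xe_def powr_mult exp_powr)
    qed
    have le3: "(\<Sum>q\<in>below e \<inter> box k. Zp K \<beta> h ?W q * K (fst e - fst q + (snd e - snd q))) powr \<delta>
        \<le> (\<Sum>q\<in>below e \<inter> box k. (Zp K \<beta> h ?W q * K (fst e - fst q + (snd e - snd q))) powr \<delta>)"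
      using dpos dle by (intro powr_sum_le mult_nonneg_nonneg Zp_nn Kd_nonneg) auto
    have eq4: "(\<Sum>q\<in>below e \<inter> box k. (Zp K \<beta> h ?W q * K (fst e - fst q + (snd e - snd q))) powr \<delta>) = (\<Sum>q\<in>below e \<inter> box k. Zx q x powr \<delta> * K (fst e - fst q + (snd e - snd q)) powr \<delta>)"
    proof (intro sum.cong refl)
      fix q assume "q \<in> below e \<inter> box k"
      then have "K (fst e - fst q + (snd e - snd q)) \<ge> 0" by (intro Kd_nonneg) auto
      then show "(Zp K \<beta> h ?W q * K (fst e - fst q + (snd e - snd q))) powr \<delta> = Zx q x powr \<delta> * K (fst e - fst q + (snd e - snd q)) powr \<delta>"
        by (simp add: powr_mult Zp_nn Zx_def)
    qed
    have "(?X e * ?Zs e) powr \<delta> \<le> exp (\<delta> * (\<beta> * \<omega> e x + h)) *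
       (\<Sum>q\<in>below e \<inter> box k. Zx q x powr \<delta> * K (fst e - fst q + (snd e - snd q)) powr \<delta>) * ?Zs e powr \<delta>"
      unfolding eq1 eq2 using le3 eq4 by (intro mult_right_mono mult_left_mono) auto
    also have "\<dots> = (\<Sum>q\<in>below e \<inter> box k.
     K (fst e - fst q + (snd e - snd q)) powr \<delta> *
       (exp (\<delta> * (\<beta> * \<omega> e x + h)) * Zx q x powr \<delta> * ?Zs e powr \<delta>))"
      by (simp add: sum_distrib_left sum_distrib_right algebra_simps)
    finally show "(?X e * ?Zs e) powr \<delta> \<le> \<dots>" .
  qed
  finally show ?thesis .
qed

definition "qq k e = cc * (\<Sum>q\<in>below e \<inter> box k. K (fst e - fst q + (snd e - snd q)) powr \<delta> * A q)"

lemma A_rec: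
  assumes k: "k \<ge> 1" and p: "p \<notin> box k"
  shows "A p \<le> (\<Sum>e\<in>rect p - box k. qq k e * A (psub p e))"
proof -
  let ?F = "\<lambda>e q x. K (fst e - fst q + (snd e - snd q)) powr \<delta> *
       (exp (\<delta> * (\<beta> * \<omega> e x + h)) * Zx q x powr \<delta> * Zp K \<beta> h (sh e (\<lambda>s. \<omega> s x)) (psub p e) powr \<delta>)"
  have int: "integrable P (?F e q)" if "q \<in> below e" for e q
    using term_exp[OF that, of "psub p e"] by simp
  have "A p \<le> expectation (\<lambda>x. \<Sum>e\<in>rect p - box k. \<Sum>q\<in>below e \<inter> box k. ?F e q x)"
    unfolding A_def
    by (rule integral_mono[OF Zx_pow_integrable]) (auto intro!: Bochner_Integration.integrable_sum int pointwise[OF k p])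
  also have "\<dots> = (\<Sum>e\<in>rect p - box k. expectation (\<lambda>x. \<Sum>q\<in>below e \<inter> box k. ?F e q x))"
    by (rule Bochner_Integration.integral_sum) (auto intro!: Bochner_Integration.integrable_sum int)
  also have "\<dots> = (\<Sum>e\<in>rect p - box k. \<Sum>q\<in>below e \<inter> box k. expectation (?F e q))"
    by (intro sum.cong refl Bochner_Integration.integral_sum int) auto
  also have "\<dots> = (\<Sum>e\<in>rect p - box k. \<Sum>q\<in>below e \<inter> box k. K (fst e - fst q + (snd e - snd q)) powr \<delta> * (cc * A q * A (psub p e)))"
  proof (intro sum.cong refl)
    fix e q assume "q \<in> below e \<inter> box k"
    then have "q \<in> below e" by simp
    from term_exp[OF this, of "psub p e"] show "expectation (?F e q) = K (fst e - fst q + (snd e - snd q)) powr \<delta> * (cc * A q * A (psub p e))"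
      by simp
  qed
  also have "\<dots> = (\<Sum>e\<in>rect p - box k. qq k e * A (psub p e))"
    by (simp add: qq_def sum_distrib_left sum_distrib_right algebra_simps)
  finally show ?thesis .
qed

end

lemma A_bound_gen:
  fixes A qq :: "nat \<times> nat \<Rightarrow> real"
  assumes k: "k \<ge> 1" and Ann: "\<And>p. A p \<ge> 0" and qnn: "\<And>e. qq e \<ge> 0"
    and rec: "\<And>p. p \<notin> box k \<Longrightarrow> A p \<le> (\<Sum>e\<in>rect p - box k. qq e * A (psub p e))"
    and S: "\<And>S. finite S \<Longrightarrow> S \<inter> box k = {} \<Longrightarrow> sum qq S \<le> 1"
  shows "A p \<le> max 1 (Max (A ` box k))"
proof (induction "fst p + snd p" arbitrary: p rule: less_induct)
  case less
  let ?C = "max 1 (Max (A ` box k))"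
  show ?case
  proof (cases "p \<in> box k")
    case True
    then have "A p \<le> Max (A ` box k)" by (intro Max_ge) auto
    then show ?thesis by simp
  next
    case False
    have "A p \<le> (\<Sum>e\<in>rect p - box k. qq e * A (psub p e))" by (rule rec[OF False])
    also have "\<dots> \<le> (\<Sum>e\<in>rect p - box k. qq e * ?C)"
    proof (rule sum_mono, rule mult_left_mono)
      fix e assume e: "e \<in> rect p - box k"
      then have "e \<noteq> (0,0)" using k by (auto simp: box_def)
      then have "fst (psub p e) + snd (psub p e) < fst p + snd p"
        using e by (cases e) (auto simp: psub_def rect_def)
      then show "A (psub p e) \<le> ?C" by (rule less.hyps)
    qed (rule qnn)
    also have "\<dots> = sum qq (rect p - box k) * ?C" by (simp add: sum_distrib_right)
    also have "\<dots> \<le> 1 * ?C"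
      by (intro mult_right_mono S) auto
    finally show ?thesis by simp
  qed
qed


lemma sum_le_infsum_ennreal:
  fixes f :: "'b \<Rightarrow> ennreal"
  assumes "finite F" "F \<subseteq> R"
  shows "sum f F \<le> infsum f R"
proof -
  have "infsum f F \<le> infsum f R"
    using assms by (intro infsum_mono_neutral nonneg_summable_on_complete) auto
  then show ?thesis using assms by simp
qed

lemma rho_sum:
  fixes Ac :: "nat \<Rightarrow> nat \<Rightarrow> real" and Kp :: "nat \<Rightarrow> real" and c :: real
  assumes k: "k \<ge> 1" and c: "c \<ge> 0" and Ann: "\<And>i j. Ac i j \<ge> 0" and Kpn: "\<And>n. Kp n \<ge> 0"
    and rho: "(\<Sum>\<^sub>\<infinity>(n, m)\<in>{k..} \<times> {k..}.
                 ennreal (c * (\<Sum>i<k. \<Sum>j<k. Kp (n - i + (m - j)) * Ac i j)))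
            + (\<Sum>\<^sub>\<infinity>(n, m)\<in>{1..k-1} \<times> {k..}.
                 ennreal (c * (\<Sum>i<n. \<Sum>j<k. Kp (n - i + (m - j)) * Ac i j)))
            + (\<Sum>\<^sub>\<infinity>(n, m)\<in>{k..} \<times> {1..k-1}.
                 ennreal (c * (\<Sum>i<k. \<Sum>j<m. Kp (n - i + (m - j)) * Ac i j)))
            \<le> 1"
    and S: "finite S" "S \<inter> box k = {}"
  shows "(\<Sum>e\<in>S. c * (\<Sum>q\<in>below e \<inter> box k. Kp (fst e - fst q + (snd e - snd q)) * Ac (fst q) (snd q))) \<le> 1"
proof -
  define g where "g e = c * (\<Sum>q\<in>below e \<inter> box k. Kp (fst e - fst q + (snd e - snd q)) * Ac (fst q) (snd q))" for e
  have gnn: "g e \<ge> 0" for e unfolding g_def using c Ann Kpn by (intro mult_nonneg_nonneg sum_nonneg) auto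
  define R1 where "R1 = ({k..} \<times> {k..} :: (nat \<times> nat) set)"
  define R2 where "R2 = ({1..k-1} \<times> {k..} :: (nat \<times> nat) set)"
  define R3 where "R3 = ({k..} \<times> {1..k-1} :: (nat \<times> nat) set)"
  let ?f1 = "\<lambda>(n, m). ennreal (c * (\<Sum>i<k. \<Sum>j<k. Kp (n - i + (m - j)) * Ac i j))"
  let ?f2 = "\<lambda>(n, m). ennreal (c * (\<Sum>i<n. \<Sum>j<k. Kp (n - i + (m - j)) * Ac i j))"
  let ?f3 = "\<lambda>(n, m). ennreal (c * (\<Sum>i<k. \<Sum>j<m. Kp (n - i + (m - j)) * Ac i j))"
  have g1: "ennreal (g e) = ?f1 e" if "e \<in> R1" for e
  proof -
    obtain n m where e: "e = (n, m)" by (cases e)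
    have be: "below (n,m) \<inter> box k = {..<k} \<times> {..<k}" using that e by (auto simp: R1_def below_def box_def)
    show ?thesis unfolding g_def e by (simp only: be sum.cartesian_product case_prod_unfold prod.case fst_conv snd_conv)
  qed
  have g2: "ennreal (g e) = ?f2 e" if "e \<in> R2" for e
  proof -
    obtain n m where e: "e = (n, m)" by (cases e)
    have be: "below (n,m) \<inter> box k = {..<n} \<times> {..<k}" using that e by (auto simp: R2_def below_def box_def)
    show ?thesis unfolding g_def e by (simp only: be sum.cartesian_product case_prod_unfold prod.case fst_conv snd_conv)
  qed
  have g3: "ennreal (g e) = ?f3 e" if "e \<in> R3" for e
  proof -
    obtain n m where e: "e = (n, m)" by (cases e)
    have be: "below (n,m) \<inter> box k = {..<k} \<times> {..<m}" using that e by (auto simp: R3_def below_def box_def)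
    show ?thesis unfolding g_def e by (simp only: be sum.cartesian_product case_prod_unfold prod.case fst_conv snd_conv)
  qed
  have g0: "g e = 0" if "e \<in> S - (R1 \<union> R2 \<union> R3)" for e
  proof -
    have "fst e = 0 \<or> snd e = 0" using that S(2) by (cases e) (auto simp: R1_def R2_def R3_def box_def)
    then have "below e = {}" by (auto simp: below_def)
    then show ?thesis by (simp add: g_def)
  qed
  have "sum g S = sum g (S \<inter> R1) + sum g (S \<inter> R2) + sum g (S \<inter> R3)"
  proof -
    have "sum g S = sum g (S \<inter> (R1 \<union> R2 \<union> R3))"
      using g0 S(1) by (intro sum.mono_neutral_right) auto
    also have "S \<inter> (R1 \<union> R2 \<union> R3) = (S \<inter> R1) \<union> (S \<inter> R2) \<union> (S \<inter> R3)" by auto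
    also have "sum g \<dots> = sum g (S \<inter> R1) + sum g (S \<inter> R2) + sum g (S \<inter> R3)"
      using S(1) by (subst sum.union_disjoint; auto simp: R1_def R2_def R3_def)+
    finally show ?thesis .
  qed
  then have "ennreal (sum g S) = (\<Sum>e\<in>S \<inter> R1. ennreal (g e)) + (\<Sum>e\<in>S \<inter> R2. ennreal (g e)) + (\<Sum>e\<in>S \<inter> R3. ennreal (g e))"
    using gnn by (simp add: sum_ennreal sum_nonneg ennreal_plus[symmetric] del: ennreal_plus)
  also have "\<dots> = sum ?f1 (S \<inter> R1) + sum ?f2 (S \<inter> R2) + sum ?f3 (S \<inter> R3)"
  proof -
    have "(\<Sum>e\<in>S \<inter> R1. ennreal (g e)) = sum ?f1 (S \<inter> R1)" by (intro sum.cong refl g1) auto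
    moreover have "(\<Sum>e\<in>S \<inter> R2. ennreal (g e)) = sum ?f2 (S \<inter> R2)" by (intro sum.cong refl g2) auto
    moreover have "(\<Sum>e\<in>S \<inter> R3. ennreal (g e)) = sum ?f3 (S \<inter> R3)" by (intro sum.cong refl g3) auto
    ultimately show ?thesis by simp
  qed
  also have "\<dots> \<le> infsum ?f1 R1 + infsum ?f2 R2 + infsum ?f3 R3"
    using S(1) by (intro add_mono sum_le_infsum_ennreal) auto
  also have "\<dots> \<le> 1" using rho by (simp add: R1_def R2_def R3_def)
  finally have "ennreal (sum g S) \<le> 1" .
  then show ?thesis by (simp add: g_def[symmetric] ennreal_le_1)
qed


lemma ln_le_powr_div:
  fixes z d :: real
  assumes "z \<ge> 0" "d > 0"
  shows "ln z \<le> z powr d / d"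
proof (cases "z = 0")
  case True then show ?thesis by simp
next
  case False
  then have z: "z > 0" using assms by simp
  have "ln (z powr d) \<le> z powr d - 1" using z by (intro ln_le_minus_one) simp
  then have "d * ln z \<le> z powr d" using z by (simp add: ln_powr)
  then show ?thesis using assms by (simp add: field_simps)
qed

lemma chain_prob_nonneg:
  assumes K: "\<forall>n\<ge>2. K n \<ge> (0::real)"
  shows "ps \<in> chains N M \<Longrightarrow> chain_prob K ps \<ge> 0"
proof (induction "N + M" arbitrary: N M ps rule: less_induct)
  case less
  have NM: "N \<ge> 1" "M \<ge> 1" using less.prems chains_N0 chains_0M by (cases N; cases M; auto)+
  from less.prems[unfolded chains_decomp[OF NM]] show ?case
  proof (elim insertE UN_E imageE)
    assume "ps = [(N,M)]"
    then show ?thesis using K NM by (simp add: chain_prob_single)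
  next
    fix ij ps' assume ij: "ij \<in> {1..<N} \<times> {1..<M}" and ps': "ps' \<in> chains (fst ij) (snd ij)" and ps: "ps = ps' @ [(N,M)]"
    have "chain_prob K ps' \<ge> 0" using ij ps' by (intro less.hyps) auto
    moreover have "K (N - fst ij + (M - snd ij)) \<ge> 0" using ij K by auto
    ultimately show ?thesis using chain_prob_snoc[OF ps'] ps by simp
  qed
qed

context zset
begin

lemma cc_nonneg: "cc \<ge> 0"
  unfolding cc_def by (rule integral_nonneg_AE) auto

lemma A_bounded:
  assumes k: "k \<ge> 1"
    and rho: "(\<Sum>\<^sub>\<infinity>(n, m)\<in>{k..} \<times> {k..}.
                 ennreal (cc * (\<Sum>i<k. \<Sum>j<k. K (n - i + (m - j)) powr \<delta> * A (i, j))))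
            + (\<Sum>\<^sub>\<infinity>(n, m)\<in>{1..k-1} \<times> {k..}.
                 ennreal (cc * (\<Sum>i<n. \<Sum>j<k. K (n - i + (m - j)) powr \<delta> * A (i, j))))
            + (\<Sum>\<^sub>\<infinity>(n, m)\<in>{k..} \<times> {1..k-1}.
                 ennreal (cc * (\<Sum>i<k. \<Sum>j<m. K (n - i + (m - j)) powr \<delta> * A (i, j))))
            \<le> 1"
  shows "A p \<le> max 1 (Max (A ` box k))"
proof (rule A_bound_gen[OF k])
  show "A p \<ge> 0" for p by (rule A_nonneg)
  show "qq k e \<ge> 0" for e unfolding qq_def
    by (intro mult_nonneg_nonneg sum_nonneg cc_nonneg A_nonneg) auto
  show "A p \<le> (\<Sum>e\<in>rect p - box k. qq k e * A (psub p e))" if "p \<notin> box k" for p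
    by (rule A_rec[OF k that])
  show "sum (qq k) S \<le> 1" if "finite S" "S \<inter> box k = {}" for S
    using rho_sum[of k cc "\<lambda>i j. A (i, j)" "\<lambda>n. K n powr \<delta>", OF k cc_nonneg A_nonneg _ rho that]
    by (simp add: qq_def)
qed

lemma upper:
  assumes "\<And>p. A p \<le> C"
  shows "expectation (\<lambda>x. ln (Zx p x)) \<le> C / \<delta>"
proof (cases "integrable P (\<lambda>x. ln (Zx p x))")
  case True
  have "expectation (\<lambda>x. ln (Zx p x)) \<le> expectation (\<lambda>x. Zx p x powr \<delta> / \<delta>)"
    using True Zx_pow_integrable[of p] dpos
    by (intro integral_mono ln_le_powr_div Zx_nonneg) auto
  also have "\<dots> = A p / \<delta>" by (simp add: A_def)
  also have "\<dots> \<le> C / \<delta>" using assms dpos by (simp add: divide_right_mono)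
  finally show ?thesis .
next
  case False
  have "0 \<le> A p" by (rule A_nonneg)
  then have "0 \<le> C / \<delta>" using assms[of p] dpos by simp
  then show ?thesis using False by (simp add: not_integrable_integral_eq)
qed

lemma omega_integrable: "integrable P (\<omega> p)"
proof (rule Bochner_Integration.integrable_bound)
  show "integrable P (\<lambda>x. exp (1 * \<omega> p x + 0) + exp ((-1) * \<omega> p x + 0))"
    by (rule Bochner_Integration.integrable_add; rule exp_integrable)
  show "\<omega> p \<in> borel_measurable P" by simp
  show "AE x in P. norm (\<omega> p x) \<le> norm (exp (1 * \<omega> p x + 0) + exp ((-1) * \<omega> p x + 0))"
  proof (rule AE_I2)
    fix x
    have a: "\<omega> p x \<le> exp (\<omega> p x)" "- \<omega> p x \<le> exp (- \<omega> p x)"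
      using exp_ge_add_one_self[of "\<omega> p x"] exp_ge_add_one_self[of "- \<omega> p x"] by linarith+
    have b: "0 < exp (\<omega> p x)" "0 < exp (- \<omega> p x)" by simp_all
    have "\<omega> p x \<le> exp (\<omega> p x) + exp (- \<omega> p x) \<and> - \<omega> p x \<le> exp (\<omega> p x) + exp (- \<omega> p x)"
      using a b by linarith
    then show "norm (\<omega> p x) \<le> norm (exp (1 * \<omega> p x + 0) + exp ((-1) * \<omega> p x + 0))"
      by (simp add: abs_le_iff)
  qed
qed

lemma lower:
  assumes centered: "expectation (\<omega> (1,1)) = 0"
    and ps: "ps \<in> chains (fst p) (snd p)" and cp: "chain_prob K ps > 0"
  shows "expectation (\<lambda>x. ln (Zx p x)) \<ge> min 0 (ln (chain_prob K ps) + h * length ps)"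
proof (cases "integrable P (\<lambda>x. ln (Zx p x))")
  case False
  then show ?thesis by (simp add: not_integrable_integral_eq)
next
  case True
  have p0: "p \<noteq> (0,0)" using ps chains_N0 by (cases p) auto
  let ?S = "\<lambda>x. sum_list (map (\<lambda>q. \<beta> * \<omega> q x + h) ps)"
  have Sint: "integrable P ?S"
  proof -
    have "integrable P (\<lambda>x. \<Sum>q\<leftarrow>qs. \<beta> * \<omega> q x + h)" for qs
      by (induction qs) (auto intro!: Bochner_Integration.integrable_add integrable_mult_right omega_integrable)
    then show ?thesis .
  qed
  have Sexp: "expectation ?S = h * length ps"
  proof -
    have E0: "expectation (\<omega> q) = 0" for q
      using single_integral(1)[of "\<lambda>y. y" q] centered by simp
    have "expectation (\<lambda>x. \<Sum>q\<leftarrow>qs. \<beta> * \<omega> q x + h) = h * length qs" for qs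
    proof (induction qs)
      case (Cons a qs)
      have i1: "integrable P (\<lambda>x. \<beta> * \<omega> a x + h)" by (auto intro!: omega_integrable)
      have i2: "integrable P (\<lambda>x. \<Sum>q\<leftarrow>qs. \<beta> * \<omega> q x + h)"
        by (induction qs) (auto intro!: Bochner_Integration.integrable_add integrable_mult_right omega_integrable)
      have "expectation (\<lambda>x. \<Sum>q\<leftarrow>a # qs. \<beta> * \<omega> q x + h) =
            expectation (\<lambda>x. \<beta> * \<omega> a x + h) + expectation (\<lambda>x. \<Sum>q\<leftarrow>qs. \<beta> * \<omega> q x + h)"
        using Bochner_Integration.integral_add[OF i1 i2] by simp
      also have "expectation (\<lambda>x. \<beta> * \<omega> a x + h) = h"
        using omega_integrable[of a] E0[of a] prob_space by simp
      finally show ?case using Cons by (simp add: algebra_simps)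
    qed simp
    then show ?thesis .
  qed
  have bound: "ln (chain_prob K ps) + ?S x \<le> ln (Zx p x)" for x
  proof -
    have "chain_prob K ps * exp (?S x) \<le> Zx p x"
      unfolding Zx_def Zp_def using p0
      by (auto intro!: member_le_sum[OF ps] mult_nonneg_nonneg chain_prob_nonneg[OF Knn] simp: Zpart_def finite_chains)
    moreover have "chain_prob K ps * exp (?S x) > 0" using cp by simp
    ultimately have "ln (chain_prob K ps * exp (?S x)) \<le> ln (Zx p x)" by simp
    then show ?thesis using cp by (simp add: ln_mult)
  qed
  have "ln (chain_prob K ps) + h * length ps = expectation (\<lambda>x. ln (chain_prob K ps) + ?S x)"
    using Sint Sexp prob_space by simp
  also have "\<dots> \<le> expectation (\<lambda>x. ln (Zx p x))"
    using Sint True bound by (intro integral_mono) auto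
  finally show ?thesis by simp
qed

end


lemma chain_exists:
  "ss \<noteq> [] \<Longrightarrow> (\<forall>s\<in>set ss. s \<ge> 2) \<Longrightarrow> sum_list ss = N + M \<Longrightarrow> length ss \<le> N \<Longrightarrow> length ss \<le> M \<Longrightarrow>
   \<exists>ps\<in>chains N M. chain_prob K ps = prod_list (map K ss) \<and> length ps = length ss"
proof (induction ss arbitrary: N M rule: rev_induct)
  case Nil then show ?case by simp
next
  case (snoc s ss')
  show ?case
  proof (cases "ss' = []")
    case True
    then have "s = N + M" "N \<ge> 1" "M \<ge> 1" using snoc.prems by auto
    then show ?thesis using True by (intro bexI[of _ "[(N,M)]"] chains_single) (auto simp: chain_prob_single)
  next
    case False
    define r where "r = length ss'"
    have r1: "r \<ge> 1" using False by (cases ss') (auto simp: r_def)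
    have rN: "r + 1 \<le> N" "r + 1 \<le> M" using snoc.prems by (auto simp: r_def)
    have s2: "s \<ge> 2" using snoc.prems by auto
    have sum': "sum_list ss' + s = N + M" using snoc.prems by simp
    have "2 * r \<le> sum_list ss'"
    proof -
      have "sum_list (map (\<lambda>_. 2::nat) ss') \<le> sum_list (map (\<lambda>x. x) ss')"
        using snoc.prems(2) by (intro sum_list_mono) auto
      then show ?thesis by (simp add: r_def sum_list_triv)
    qed
    define a where "a = (if s + r \<le> M + 1 then 1 else s + r - M)"
    define b where "b = s - a"
    have ab: "a \<ge> 1" "b \<ge> 1" "a + b = s" "N - a \<ge> r" "M - b \<ge> r" "a \<le> N" "b \<le> M"
      using rN s2 sum' \<open>2 * r \<le> sum_list ss'\<close> by (auto simp: a_def b_def split: if_splits)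
    have "\<exists>ps\<in>chains (N - a) (M - b). chain_prob K ps = prod_list (map K ss') \<and> length ps = length ss'"
      using False snoc.prems ab sum' by (intro snoc.IH) (auto simp: r_def)
    then obtain ps where ps: "ps \<in> chains (N - a) (M - b)" "chain_prob K ps = prod_list (map K ss')" "length ps = length ss'"
      by blast
    have "ps @ [(N,M)] \<in> chains N M" using ps(1) ab by (intro chains_snoc) auto
    moreover have "chain_prob K (ps @ [(N,M)]) = prod_list (map K (ss' @ [s]))"
      using chain_prob_snoc[OF ps(1), of K N M] ps(2) ab by simp
    ultimately show ?thesis using ps(3) by auto
  qed
qed

lemma binary_rep:
  "q < 2 ^ k \<Longrightarrow> \<exists>js. sum_list (map (\<lambda>j. (2::nat) ^ j) js) = q \<and> length js \<le> k \<and> (\<forall>j\<in>set js. j < k)"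
proof (induction k arbitrary: q)
  case 0 then show ?case by (intro exI[of _ "[]"]) auto
next
  case (Suc k)
  have "q div 2 < 2 ^ k" using Suc.prems by auto
  then obtain js where js: "sum_list (map (\<lambda>j. (2::nat) ^ j) js) = q div 2" "length js \<le> k" "\<forall>j\<in>set js. j < k"
    using Suc.IH by blast
  define js' where "js' = map Suc js @ (if odd q then [0] else [])"
  have "sum_list (map (\<lambda>j. (2::nat) ^ j) (map Suc js)) = 2 * sum_list (map (\<lambda>j. (2::nat) ^ j) js)"
    by (induction js) auto
  then have "sum_list (map (\<lambda>j. (2::nat) ^ j) js') = q"
    using js(1) by (auto simp: js'_def)
  moreover have "length js' \<le> Suc k" "\<forall>j\<in>set js'. j < Suc k" using js by (auto simp: js'_def)
  ultimately show ?case by blast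
qed

lemma prod_list_ge:
  fixes f :: "nat \<Rightarrow> real"
  shows "(\<forall>s\<in>set ss. f s \<ge> \<mu>) \<Longrightarrow> \<mu> \<ge> 0 \<Longrightarrow> prod_list (map f ss) \<ge> \<mu> ^ length ss"
proof (induction ss)
  case (Cons a ss)
  then have "\<mu> * \<mu> ^ length ss \<le> f a * prod_list (map f ss)"
    by (intro mult_mono) auto
  then show ?case by simp
qed simp

lemma sv_basic:
  assumes "slowly_varying L"
  shows "\<exists>X::nat. X \<ge> 2 \<and> (\<forall>x\<ge>real X. L x > 0 \<and> L (2 * x) \<ge> L x / 2)"
proof -
  have pos: "\<forall>\<^sub>F x in at_top. L x > 0" and lim: "((\<lambda>x. L (2 * x) / L x) \<longlongrightarrow> 1) at_top"
    using assms by (auto simp: slowly_varying_def)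
  have "\<forall>\<^sub>F x in at_top. L (2 * x) / L x > 1/2"
    using lim by (rule order_tendstoD) simp
  with pos have "\<forall>\<^sub>F x in at_top. L x > 0 \<and> L (2 * x) \<ge> L x / 2"
    by eventually_elim (auto simp: field_simps)
  then obtain X0 where X0: "\<forall>x\<ge>X0. L x > 0 \<and> L (2 * x) \<ge> L x / 2"
    by (auto simp: eventually_at_top_linorder)
  define X where "X = max 2 (nat \<lceil>X0\<rceil>)"
  have "real X \<ge> X0" unfolding X_def by linarith
  then show ?thesis using X0 by (intro exI[of _ X]) (auto simp: X_def)
qed


lemma L_pow2:
  fixes L :: "real \<Rightarrow> real"
  assumes LX: "\<forall>x\<ge>real X. L x > 0 \<and> L (2 * x) \<ge> L x / 2" and X: "X \<ge> 1"
  shows "L (real (X * 2 ^ j)) \<ge> L (real X) / 2 ^ j"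
proof (induction j)
  case 0 then show ?case by simp
next
  case (Suc j)
  have "X * 1 \<le> X * 2 ^ j" by (intro mult_le_mono2) simp
  then have ge: "real (X * 2 ^ j) \<ge> real X" by linarith
  have "L (real (X * 2 ^ Suc j)) = L (2 * real (X * 2 ^ j))" by (simp add: algebra_simps)
  also have "\<dots> \<ge> L (real (X * 2 ^ j)) / 2" using LX ge by blast
  finally have h1: "L (real (X * 2 ^ j)) / 2 \<le> L (real (X * 2 ^ Suc j))" .
  have "L (real X) / 2 ^ Suc j = (L (real X) / 2 ^ j) / 2" by simp
  also have "\<dots> \<le> L (real (X * 2 ^ j)) / 2" using Suc.IH by (simp add: divide_right_mono)
  finally show ?case using h1 by linarith
qed

lemma good_chain:
  fixes L :: "real \<Rightarrow> real" and \<alpha> :: real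
  assumes \<alpha>: "\<alpha> \<ge> 0" and X: "X \<ge> 2"
    and LX: "\<forall>x\<ge>real X. L x > 0 \<and> L (2 * x) \<ge> L x / 2"
    and n: "N + M \<ge> X" and kk: "N + M < 2 ^ kk" "kk + 1 \<le> N" "kk + 1 \<le> M"
  shows "\<exists>ps\<in>chains N M. chain_prob (Kfun \<alpha> L) ps \<ge>
           (Min (L ` real ` {X..<2*X}) / 2 ^ kk * real (N + M) powr (-(2+\<alpha>))) ^ length ps
         \<and> length ps \<le> kk + 1"
proof -
  define n where "n = N + M"
  define m0 where "m0 = Min (L ` real ` {X..<2*X})"
  define \<mu> where "\<mu> = m0 / 2 ^ kk * real n powr (-(2+\<alpha>))"
  have fin: "finite (L ` real ` {X..<2*X})" "L ` real ` {X..<2*X} \<noteq> {}" using X by auto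
  have m0pos: "m0 > 0" unfolding m0_def using fin LX by (subst Min_gr_iff) auto
  have m0le: "m0 \<le> L (real t)" if "t \<in> {X..<2*X}" for t
    unfolding m0_def using fin that by (intro Min_le) auto
  define r0 where "r0 = X + n mod X"
  define q where "q = n div X - 1"
  have "0 < n div X" using n X by (simp add: n_def div_greater_zero_iff)
  then have ndiv: "n div X \<ge> 1" by simp
  have nr: "n = r0 + X * q"
  proof -
    have "n = X * (n div X) + n mod X" by simp
    also have "X * (n div X) = X + X * q" using ndiv by (simp add: q_def algebra_simps)
    finally show ?thesis by (simp add: r0_def)
  qed
  have r0X: "r0 \<in> {X..<2*X}" using X by (auto simp: r0_def)
  have "q \<le> n div X" by (simp add: q_def)
  moreover have "n div X \<le> n" by (rule div_le_dividend)
  moreover have "n < 2 ^ kk" using kk(1) by (simp add: n_def)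
  ultimately have "q < 2 ^ kk" by linarith
  then obtain js where js: "sum_list (map (\<lambda>j. (2::nat) ^ j) js) = q" "length js \<le> kk" "\<forall>j\<in>set js. j < kk"
    using binary_rep by blast
  define ss where "ss = r0 # map (\<lambda>j. X * 2 ^ j) js"
  have sum_ss: "sum_list ss = n"
  proof -
    have "sum_list (map (\<lambda>j. X * 2 ^ j) js) = X * sum_list (map (\<lambda>j. (2::nat) ^ j) js)"
      by (induction js) (auto simp: algebra_simps)
    then show ?thesis using js nr by (simp add: ss_def)
  qed
  have len: "length ss \<le> kk + 1" using js by (simp add: ss_def)
  have X2j: "X * 2 ^ j \<ge> 2" for j :: nat
  proof -
    have "X * 1 \<le> X * 2 ^ j" by (intro mult_le_mono2) simp
    then show ?thesis using X by linarith
  qed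
  have ss2: "\<forall>s\<in>set ss. s \<ge> 2" using X r0X X2j by (auto simp: ss_def)
  obtain ps where ps: "ps \<in> chains N M" "chain_prob (Kfun \<alpha> L) ps = prod_list (map (Kfun \<alpha> L) ss)" "length ps = length ss"
    using chain_exists[of ss N M "Kfun \<alpha> L"] ss2 sum_ss len kk by (auto simp: ss_def n_def)
  have Lbound: "L (real s) \<ge> m0 / 2 ^ kk" if s: "s \<in> set ss" for s
  proof -
    have m0' : "m0 / 2 ^ kk \<le> m0 / 2 ^ j" if "j \<le> kk" for j
      using m0pos that by (intro divide_left_mono) auto
    show ?thesis
    proof (cases "s = r0")
      case True
      then show ?thesis using m0le[OF r0X] m0'[of 0] by simp
    next
      case False
      then obtain j where j: "j \<in> set js" "s = X * 2 ^ j" using s by (auto simp: ss_def)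
      have "m0 / 2 ^ kk \<le> m0 / 2 ^ j" using j js by (intro m0') auto
      also have "\<dots> \<le> L (real X) / 2 ^ j" using m0le[of X] X by (intro divide_right_mono) auto
      also have "\<dots> \<le> L (real s)" using L_pow2[OF LX, of j] X j by simp
      finally show ?thesis .
    qed
  qed
  have Kbound: "Kfun \<alpha> L s \<ge> \<mu>" if s: "s \<in> set ss" for s
  proof -
    have sle: "s \<le> n" using s sum_ss member_le_sum_list[OF s] by simp
    have spos: "s \<ge> 2" using ss2 s by auto
    have "real n powr (-(2+\<alpha>)) \<le> real s powr (-(2+\<alpha>))"
      using sle spos \<alpha> by (intro powr_mono2') auto
    moreover have "m0 / 2 ^ kk > 0" using m0pos by simp
    ultimately show ?thesis unfolding \<mu>_def Kfun_def
      using Lbound[OF s] by (intro mult_mono) auto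
  qed
  have "prod_list (map (Kfun \<alpha> L) ss) \<ge> \<mu> ^ length ss"
    using Kbound m0pos by (intro prod_list_ge) (auto simp: \<mu>_def)
  then show ?thesis using ps len by (intro bexI[of _ ps]) (auto simp: \<mu>_def m0_def n_def)
qed


lemma asym1:
  fixes a b c :: real
  assumes "a \<ge> 0" "b \<ge> 0" "c > 0"
  shows "((\<lambda>N::nat. (log 2 (c * real N + 1) + 2) * (a + (log 2 (c * real N + 1) + 1) * ln 2 + b * ln (c * real N)) / real N) \<longlongrightarrow> 0) at_top"
  using assms by real_asymp

lemma asym2:
  fixes c g :: real
  assumes "c > 0" "g > 0"
  shows "\<forall>\<^sub>F N in at_top. log 2 (c * real (N::nat) + 1) + 2 \<le> g * real N"
  using assms by real_asymp

lemma asym3: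
  fixes C :: real
  shows "((\<lambda>N::nat. C / real N) \<longlongrightarrow> 0) at_top"
  by real_asymp


theorem proposition4p1:
  fixes \<alpha> \<beta> h \<delta> \<gamma> :: real
    and L :: "real \<Rightarrow> real"
    and P :: "'a measure"
    and \<omega> :: "nat \<times> nat \<Rightarrow> 'a \<Rightarrow> real"
    and k :: nat
  defines "K \<equiv> Kfun \<alpha> L"
  defines "Z \<equiv> (\<lambda>N M x. Zpart K \<beta> h (\<lambda>p. \<omega> p x) N M)"
  defines "A \<equiv> (\<lambda>i j. if i = 0 \<and> j = 0 then 1
                      else if i = 0 \<or> j = 0 then 0
                      else prob_space.expectation P (\<lambda>x. Z i j x powr \<delta>))"
  defines "c \<equiv> prob_space.expectation P (\<lambda>x. exp (\<delta> * (\<beta> * \<omega> (1, 1) x + h)))"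
  assumes alpha: "\<alpha> \<ge> 0"
    and L_sv: "slowly_varying L"
    and K_nonneg: "\<forall>n\<ge>2. K n \<ge> 0"
    and K_norm: "((\<lambda>(n, m). K (n + m)) has_sum 1) ({1..} \<times> {1..})"
    and P: "prob_space P"
    and indep: "prob_space.indep_vars P (\<lambda>_. borel) \<omega> UNIV"
    and ident: "\<forall>p. distr P borel (\<omega> p) = distr P borel (\<omega> (1, 1))"
    and centered: "prob_space.expectation P (\<omega> (1, 1)) = 0"
    and unit_var: "prob_space.expectation P (\<lambda>x. (\<omega> (1, 1) x)\<^sup>2) = 1"
    and expmom: "\<forall>b::real. integrable P (\<lambda>x. exp (b * \<omega> (1, 1) x))"
    and delta: "0 < \<delta>" "\<delta> < 1"
    and gamma: "\<gamma> > 0"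
    and k: "k \<ge> 1"
    and rho: "(\<Sum>\<^sub>\<infinity>(n, m)\<in>{k..} \<times> {k..}.
                 ennreal (c * (\<Sum>i<k. \<Sum>j<k. K (n - i + (m - j)) powr \<delta> * A i j)))
            + (\<Sum>\<^sub>\<infinity>(n, m)\<in>{1..k-1} \<times> {k..}.
                 ennreal (c * (\<Sum>i<n. \<Sum>j<k. K (n - i + (m - j)) powr \<delta> * A i j)))
            + (\<Sum>\<^sub>\<infinity>(n, m)\<in>{k..} \<times> {1..k-1}.
                 ennreal (c * (\<Sum>i<k. \<Sum>j<m. K (n - i + (m - j)) powr \<delta> * A i j)))
            \<le> 1"
  shows "\<forall>Mseq :: nat \<Rightarrow> nat. ((\<lambda>N. real (Mseq N) / real N) \<longlongrightarrow> \<gamma>) sequentially \<longrightarrow>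
           ((\<lambda>N. prob_space.expectation P (\<lambda>x. ln (Z N (Mseq N) x)) / real N) \<longlongrightarrow> 0) sequentially"
proof (intro allI impI)
  fix Mseq :: "nat \<Rightarrow> nat"
  assume Mlim: "((\<lambda>N. real (Mseq N) / real N) \<longlongrightarrow> \<gamma>) sequentially"
  interpret z: zset P \<omega> K \<beta> h \<delta>
  proof (rule zset.intro)
    show "pset P \<omega>" by (rule pset.intro[OF P]) (rule pset_axioms.intro[OF indep ident])
    show "zset_axioms P \<omega> K \<delta>" by (rule zset_axioms.intro) (use K_nonneg delta expmom in auto)
  qed
  have Aeq: "A i j = z.A (i, j)" for i j
  proof -
    consider "i = 0 \<and> j = 0" | "\<not> (i = 0 \<and> j = 0) \<and> (i = 0 \<or> j = 0)" | "i \<noteq> 0 \<and> j \<noteq> 0" by blast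
    then show ?thesis
    proof cases
      case 1 then show ?thesis by (simp add: A_def z.A_def z.Zx_def z.prob_space)
    next
      case 2
      then have "Zp K \<beta> h w (i, j) = 0" for w by (intro Zp_zero) auto
      then show ?thesis using 2 by (simp add: A_def z.A_def z.Zx_def)
    next
      case 3
      then show ?thesis by (simp add: A_def z.A_def z.Zx_def Zp_def Z_def)
    qed
  qed
  have ceq: "c = z.cc" by (simp add: c_def z.cc_def)
  have rho': "(\<Sum>\<^sub>\<infinity>(n, m)\<in>{k..} \<times> {k..}.
                 ennreal (z.cc * (\<Sum>i<k. \<Sum>j<k. K (n - i + (m - j)) powr \<delta> * z.A (i, j))))
            + (\<Sum>\<^sub>\<infinity>(n, m)\<in>{1..k-1} \<times> {k..}.
                 ennreal (z.cc * (\<Sum>i<n. \<Sum>j<k. K (n - i + (m - j)) powr \<delta> * z.A (i, j))))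
            + (\<Sum>\<^sub>\<infinity>(n, m)\<in>{k..} \<times> {1..k-1}.
                 ennreal (z.cc * (\<Sum>i<k. \<Sum>j<m. K (n - i + (m - j)) powr \<delta> * z.A (i, j))))
            \<le> 1"
    using rho by (simp only: Aeq ceq)
  define Cb where "Cb = max 1 (Max (z.A ` box k))"
  have Abd: "z.A p \<le> Cb" for p unfolding Cb_def by (rule z.A_bounded[OF k rho'])
  have Zeq: "Z N M x = z.Zx (N, M) x" if "N \<ge> 1" for N M x
    using that by (simp add: Z_def z.Zx_def Zp_def)
  define E where "E N = prob_space.expectation P (\<lambda>x. ln (Z N (Mseq N) x))" for N
  have upper: "\<forall>\<^sub>F N in sequentially. E N / real N \<le> Cb / \<delta> / real N"
  proof (rule eventually_mono[OF eventually_ge_at_top[of 1]])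
    fix N :: nat assume N: "N \<ge> 1"
    have "E N \<le> Cb / \<delta>" unfolding E_def using z.upper[OF Abd, of "(N, Mseq N)"] Zeq[OF N] by simp
    then show "E N / real N \<le> Cb / \<delta> / real N" by (rule divide_right_mono) simp
  qed
  obtain X :: nat where X: "X \<ge> 2" and LX: "\<forall>x\<ge>real X. L x > 0 \<and> L (2 * x) \<ge> L x / 2"
    using sv_basic[OF L_sv] by blast
  define m0 where "m0 = Min (L ` real ` {X..<2*X})"
  have m0pos: "m0 > 0" unfolding m0_def using X LX by (subst Min_gr_iff) auto
  define cN where "cN = \<gamma> + 2"
  define a0 where "a0 = \<bar>ln m0\<bar> + \<bar>h\<bar>"
  define G where "G N = (log 2 (cN * real N + 1) + 2) * (a0 + (log 2 (cN * real N + 1) + 1) * ln 2 + (2 + \<alpha>) * ln (cN * real N))" for N :: nat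
  have ev1: "\<forall>\<^sub>F N in sequentially. real (Mseq N) / real N < \<gamma> + 1"
    using Mlim by (rule order_tendstoD) simp
  have ev2: "\<forall>\<^sub>F N in sequentially. real (Mseq N) / real N > \<gamma> / 2"
    using Mlim gamma by (intro order_tendstoD) auto
  have ev3: "\<forall>\<^sub>F N in sequentially. log 2 (cN * real N + 1) + 2 \<le> (\<gamma> / 2) * real N"
    using gamma by (intro asym2) (auto simp: cN_def)
  have ev4: "\<forall>\<^sub>F N in sequentially. log 2 (cN * real N + 1) + 2 \<le> 1 * real N"
    using gamma by (intro asym2) (auto simp: cN_def)
  have lower: "\<forall>\<^sub>F N in sequentially. - G N / real N \<le> E N / real N"
    using ev1 ev2 ev3 ev4 eventually_ge_at_top[of "X + 1"]
  proof eventually_elim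
    case (elim N)
    define M where "M = Mseq N"
    define n where "n = N + M"
    have N1: "N \<ge> 1" using elim X by simp
    have NX: "n \<ge> X" using elim by (simp add: n_def)
    have Mup: "real M < (\<gamma> + 1) * real N" using elim(1) N1 by (simp add: M_def field_simps)
    have Mlo: "real M > \<gamma> / 2 * real N" using elim(2) N1 by (simp add: M_def field_simps)
    have nup: "real n \<le> cN * real N" using Mup by (simp add: n_def cN_def algebra_simps)
    have n1: "real n \<ge> 1" using N1 by (simp add: n_def)
    define kk where "kk = nat \<lceil>log 2 (real n + 1)\<rceil>"
    have lg0: "log 2 (real n + 1) \<ge> 0" by simp
    have kkr: "real kk = real_of_int \<lceil>log 2 (real n + 1)\<rceil>" using lg0 by (simp add: kk_def)
    have kk_up: "real kk \<le> log 2 (real n + 1) + 1" using kkr by linarith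
    have "real n + 1 = 2 powr (log 2 (real n + 1))" by simp
    also have "\<dots> \<le> 2 powr (real kk)" using kkr by (intro powr_mono) auto
    also have "\<dots> = 2 ^ kk" by (simp add: powr_realpow)
    finally have "real n + 1 \<le> 2 ^ kk" .
    then have "real (n + 1) \<le> real ((2::nat) ^ kk)" by simp
    then have "n + 1 \<le> 2 ^ kk" by (simp only: of_nat_le_iff)
    then have kk1: "n < 2 ^ kk" by simp
    have lgmono: "log 2 (real n + 1) \<le> log 2 (cN * real N + 1)" using nup n1 by simp
    have kk2: "real kk + 1 \<le> log 2 (cN * real N + 1) + 2" using kk_up lgmono by linarith
    have kkN: "kk + 1 \<le> N" using kk2 elim(4) by linarith
    have kkM: "kk + 1 \<le> M" using kk2 elim(3) Mlo by linarith
    obtain ps where ps: "ps \<in> chains N M"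
      and cpb: "chain_prob K ps \<ge> (m0 / 2 ^ kk * real n powr (-(2+\<alpha>))) ^ length ps"
      and len: "length ps \<le> kk + 1"
      using good_chain[OF alpha X LX, of N M kk] NX kk1 kkN kkM by (auto simp: K_def n_def m0_def)
    define \<mu> where "\<mu> = m0 / 2 ^ kk * real n powr (-(2+\<alpha>))"
    have mupos: "\<mu> > 0" using m0pos n1 by (simp add: \<mu>_def)
    have "(m0 / 2 ^ kk * real n powr (-(2+\<alpha>))) ^ length ps > 0" using m0pos n1 by simp
    then have cppos: "chain_prob K ps > 0" using cpb by linarith
    have lnmu: "ln \<mu> = ln m0 - real kk * ln 2 - (2 + \<alpha>) * ln (real n)"
      using m0pos n1 by (simp add: \<mu>_def ln_mult ln_div ln_powr ln_realpow algebra_simps)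
    have lnmu_abs: "\<bar>ln \<mu>\<bar> \<le> \<bar>ln m0\<bar> + real kk * ln 2 + (2 + \<alpha>) * ln (real n)"
    proof -
      have "real kk * ln 2 \<ge> 0" "(2 + \<alpha>) * ln (real n) \<ge> 0" using n1 alpha by auto
      then show ?thesis unfolding lnmu by linarith
    qed
    have "ln (chain_prob K ps) \<ge> ln (\<mu> ^ length ps)"
    proof -
      have "\<mu> ^ length ps \<le> chain_prob K ps" using cpb by (simp only: \<mu>_def)
      moreover have "\<mu> ^ length ps > 0" using mupos by simp
      ultimately show ?thesis by simp
    qed
    then have lncp: "ln (chain_prob K ps) \<ge> real (length ps) * ln \<mu>" using mupos by (simp add: ln_realpow)
    have f1: "real (length ps) * ln \<mu> \<ge> - (real kk + 1) * \<bar>ln \<mu>\<bar>"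
    proof -
      have "real (length ps) * (- \<bar>ln \<mu>\<bar>) \<le> real (length ps) * ln \<mu>" by (rule mult_left_mono) auto
      then have "real (length ps) * ln \<mu> \<ge> - (real (length ps) * \<bar>ln \<mu>\<bar>)" by simp
      moreover have "real (length ps) * \<bar>ln \<mu>\<bar> \<le> (real kk + 1) * \<bar>ln \<mu>\<bar>" using len by (intro mult_right_mono) auto
      ultimately show ?thesis by linarith
    qed
    have f2: "h * real (length ps) \<ge> - \<bar>h\<bar> * (real kk + 1)"
    proof -
      have "(- \<bar>h\<bar>) * real (length ps) \<le> h * real (length ps)" by (rule mult_right_mono) auto
      then have "h * real (length ps) \<ge> - (\<bar>h\<bar> * real (length ps))" by simp
      moreover have "\<bar>h\<bar> * real (length ps) \<le> \<bar>h\<bar> * (real kk + 1)" using len by (intro mult_left_mono) auto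
      ultimately show ?thesis by linarith
    qed
    have lb: "ln (chain_prob K ps) + h * real (length ps) \<ge> - ((real kk + 1) * (a0 + real kk * ln 2 + (2 + \<alpha>) * ln (real n)))"
    proof -
      have t1: "(real kk + 1) * \<bar>ln \<mu>\<bar> \<le> (real kk + 1) * (\<bar>ln m0\<bar> + real kk * ln 2 + (2 + \<alpha>) * ln (real n))"
        by (rule mult_left_mono[OF lnmu_abs]) simp
      have t2: "(real kk + 1) * (a0 + real kk * ln 2 + (2 + \<alpha>) * ln (real n)) = (real kk + 1) * (\<bar>ln m0\<bar> + real kk * ln 2 + (2 + \<alpha>) * ln (real n)) + \<bar>h\<bar> * (real kk + 1)"
        by (simp add: a0_def algebra_simps)
      show ?thesis using t1 t2 lncp f1 f2 by linarith
    qed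
    have Bnn: "0 \<le> a0 + real kk * ln 2 + (2 + \<alpha>) * ln (real n)" using n1 alpha by (auto simp: a0_def)
    have Bnn2: "0 \<le> (real kk + 1) * (a0 + real kk * ln 2 + (2 + \<alpha>) * ln (real n))" using Bnn by simp
    have Gb: "(real kk + 1) * (a0 + real kk * ln 2 + (2 + \<alpha>) * ln (real n)) \<le> G N"
    proof -
      have a: "real kk + 1 \<le> log 2 (cN * real N + 1) + 2" by (rule kk2)
      have b: "real kk * ln 2 \<le> (log 2 (cN * real N + 1) + 1) * ln 2"
        using kk_up lgmono by (intro mult_right_mono) auto
      have c: "(2 + \<alpha>) * ln (real n) \<le> (2 + \<alpha>) * ln (cN * real N)"
        using nup n1 alpha by (intro mult_left_mono) auto
      note nn = Bnn
      have "0 \<le> a0 + real kk * ln 2 + (2 + \<alpha>) * ln (real n)" using n1 alpha by (auto simp: a0_def)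
      have "(real kk + 1) * (a0 + real kk * ln 2 + (2 + \<alpha>) * ln (real n)) \<le>
            (log 2 (cN * real N + 1) + 2) * (a0 + real kk * ln 2 + (2 + \<alpha>) * ln (real n))"
        using a nn by (intro mult_right_mono) auto
      also have "\<dots> \<le> G N" unfolding G_def
      proof (rule mult_left_mono)
        show "a0 + real kk * ln 2 + (2 + \<alpha>) * ln (real n) \<le> a0 + (log 2 (cN * real N + 1) + 1) * ln 2 + (2 + \<alpha>) * ln (cN * real N)"
          using b c by linarith
        show "0 \<le> log 2 (cN * real N + 1) + 2" using a by linarith
      qed
      finally show ?thesis .
    qed
    have "E N \<ge> min 0 (ln (chain_prob K ps) + h * real (length ps))"
      unfolding E_def M_def[symmetric] using z.lower[OF centered _ cppos, of "(N, M)"] ps Zeq[OF N1] by simp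
    moreover have "- G N \<le> min 0 (ln (chain_prob K ps) + h * real (length ps))"
      using lb Gb Bnn2 by (simp add: min_def)
    ultimately have "E N \<ge> - G N" by linarith
    then show ?case by (rule divide_right_mono) simp
  qed
  have Glim: "((\<lambda>N. - G N / real N) \<longlongrightarrow> 0) sequentially"
  proof -
    have "((\<lambda>N. G N / real N) \<longlongrightarrow> 0) sequentially"
      unfolding G_def using gamma alpha by (intro asym1) (auto simp: a0_def cN_def)
    then show ?thesis using tendsto_minus[of "\<lambda>N. G N / real N" 0 sequentially] by simp
  qed
  have Ulim: "((\<lambda>N. Cb / \<delta> / real N) \<longlongrightarrow> 0) sequentially" by (rule asym3)
  have "((\<lambda>N. E N / real N) \<longlongrightarrow> 0) sequentially"
    by (rule tendsto_sandwich[OF lower upper Glim Ulim])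
  then show "((\<lambda>N. prob_space.expectation P (\<lambda>x. ln (Z N (Mseq N) x)) / real N) \<longlongrightarrow> 0) sequentially"
    by (simp add: E_def)
qed

end
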